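(* Within the pseudovariety $\mathsf M$ of all finite monoids, every set $\Sigma$ of $\mathsf M$-pseudoidentities such that $[\![\Sigma]\!]$ consists of groups is h-strong.
   Context: $\mathsf M$ is the pseudovariety of finite monoids (signature: multiplication and $1$); $\Omega_A\mathsf M$ is the free profinite monoid on a finite set $A$. An $\mathsf M$-pseudoidentity is $u=v$ with $u,v\in\Omega_B\mathsf M$, $B$ finite; it holds in a finite monoid $T$ if both sides agree under every continuous homomorphism $\Omega_B\mathsf M\to T$; $[\![\Sigma]\!]$ is the class of finite monoids satisfying $\Sigma$. Provability: for finite $A$, $\Sigma_0\subseteq\Omega_A\mathsf M\times\Omega_A\mathsf M$ is the set of pairs $(\mathbf t(\varphi(u),w_1,\dots,w_n),\mathbf t(\varphi(v),w_1,\dots,w_n))$ with $u=v$ or $v=u$ in $\Sigma$ ($u,v\in\Omega_B\mathsf M$), $\varphi:\Omega_B\mathsf M\to\Omega_A\mathsf M$ a continuous homomorphism, $\mathbf t$ a monoid term, $w_i\in\Omega_A\mathsf M$; $\Sigma_{2\alpha+1}$ is the transitive closure of $\Sigma_{2\alpha}$, $\Sigma_{2\alpha+2}$ the topological closure of $\Sigma_{2\alpha+1}$, unions at limit ordinals; $u=v$ is provable from $\Sigma$ if $(u,v)\in\bigcup_\alpha\Sigma_\alpha$. $\Sigma$ is h-strong within $\mathsf M$ if every $\mathsf M$-pseudoidentity valid in $[\![\Sigma]\!]$ is provable from $\Sigma$. *)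

theory Defs
  imports "HOL-Algebra.Group"
begin

text \<open>Finite monoids are represented (up to isomorphism) as HOL-Algebra monoids with a
finite carrier contained in nat.
The free profinite monoid on A is realised as the set of implicit operations:
families w T f (T a finite monoid, f : A -> carrier T) natural w.r.t. monoid
homomorphisms, normalised to undefined outside the admissible inputs.\<close>

type_synonym pw = "nat monoid \<Rightarrow> (nat \<Rightarrow> nat) \<Rightarrow> nat"

definition tests :: "nat set \<Rightarrow> (nat monoid \<times> (nat \<Rightarrow> nat)) set" where
  "tests A = {(T, f). monoid T \<and> finite (carrier T) \<and> f ` A \<subseteq> carrier T}"

definition mhom :: "(nat \<Rightarrow> nat) \<Rightarrow> nat monoid \<Rightarrow> nat monoid \<Rightarrow> bool" where
  "mhom h T T' \<longleftrightarrow> h \<in> carrier T \<rightarrow> carrier T'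
     \<and> (\<forall>x\<in>carrier T. \<forall>y\<in>carrier T. h (x \<otimes>\<^bsub>T\<^esub> y) = h x \<otimes>\<^bsub>T'\<^esub> h y)
     \<and> h \<one>\<^bsub>T\<^esub> = \<one>\<^bsub>T'\<^esub>"

definition Omega :: "nat set \<Rightarrow> pw set" where
  "Omega A = {w.
     (\<forall>T f. (T, f) \<in> tests A \<longrightarrow> w T f \<in> carrier T)
   \<and> (\<forall>T f. (T, f) \<notin> tests A \<longrightarrow> w T f = undefined)
   \<and> (\<forall>T f g. (\<forall>a\<in>A. f a = g a) \<longrightarrow> w T f = w T g)
   \<and> (\<forall>T f T' h. (T, f) \<in> tests A \<longrightarrow> monoid T' \<longrightarrow> finite (carrier T') \<longrightarrow> mhom h T T'
        \<longrightarrow> w T' (h \<circ> f) = h (w T f))}"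

definition omul :: "nat set \<Rightarrow> pw \<Rightarrow> pw \<Rightarrow> pw" where
  "omul A u v = (\<lambda>T f. if (T, f) \<in> tests A then u T f \<otimes>\<^bsub>T\<^esub> v T f else undefined)"

definition oone :: "nat set \<Rightarrow> pw" where
  "oone A = (\<lambda>T f. if (T, f) \<in> tests A then \<one>\<^bsub>T\<^esub> else undefined)"

text \<open>Agreement on a set of evaluation points; finite sets of evaluation points
give the basic open neighbourhoods of the (pointwise = profinite) topology.\<close>
definition agree :: "(nat monoid \<times> (nat \<Rightarrow> nat)) set \<Rightarrow> pw \<Rightarrow> pw \<Rightarrow> bool" where
  "agree F u u' \<longleftrightarrow> (\<forall>(T, f)\<in>F. u T f = u' T f)"

definition cont_hom :: "nat set \<Rightarrow> nat set \<Rightarrow> (pw \<Rightarrow> pw) \<Rightarrow> bool" where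
  "cont_hom B A \<phi> \<longleftrightarrow> \<phi> \<in> Omega B \<rightarrow> Omega A
     \<and> (\<forall>u\<in>Omega B. \<forall>v\<in>Omega B. \<phi> (omul B u v) = omul A (\<phi> u) (\<phi> v))
     \<and> \<phi> (oone B) = oone A
     \<and> (\<forall>u\<in>Omega B. \<forall>G. finite G \<and> G \<subseteq> tests A \<longrightarrow>
          (\<exists>F. finite F \<and> F \<subseteq> tests B \<and>
               (\<forall>u'\<in>Omega B. agree F u u' \<longrightarrow> agree G (\<phi> u) (\<phi> u'))))"

definition cont_hom_fin :: "nat set \<Rightarrow> nat monoid \<Rightarrow> (pw \<Rightarrow> nat) \<Rightarrow> bool" where
  "cont_hom_fin B T \<psi> \<longleftrightarrow> \<psi> \<in> Omega B \<rightarrow> carrier T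
     \<and> (\<forall>u\<in>Omega B. \<forall>v\<in>Omega B. \<psi> (omul B u v) = \<psi> u \<otimes>\<^bsub>T\<^esub> \<psi> v)
     \<and> \<psi> (oone B) = \<one>\<^bsub>T\<^esub>
     \<and> (\<forall>u\<in>Omega B. \<exists>F. finite F \<and> F \<subseteq> tests B \<and>
               (\<forall>u'\<in>Omega B. agree F u u' \<longrightarrow> \<psi> u' = \<psi> u))"

text \<open>A pseudoidentity is a triple (B, u, v) with u, v in Omega B.\<close>
definition psat :: "nat monoid \<Rightarrow> nat set \<times> pw \<times> pw \<Rightarrow> bool" where
  "psat T p = (case p of (B, u, v) \<Rightarrow> \<forall>\<psi>. cont_hom_fin B T \<psi> \<longrightarrow> \<psi> u = \<psi> v)"

definition models :: "(nat set \<times> pw \<times> pw) set \<Rightarrow> nat monoid set" where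
  "models Sig = {T. monoid T \<and> finite (carrier T) \<and> (\<forall>p\<in>Sig. psat T p)}"

datatype mterm = MVar nat | MOne | MMul mterm mterm

fun mvars :: "mterm \<Rightarrow> nat set" where
  "mvars (MVar i) = {i}"
| "mvars MOne = {}"
| "mvars (MMul s t) = mvars s \<union> mvars t"

fun teval :: "nat set \<Rightarrow> (nat \<Rightarrow> pw) \<Rightarrow> mterm \<Rightarrow> pw" where
  "teval A \<sigma> (MVar i) = \<sigma> i"
| "teval A \<sigma> MOne = oone A"
| "teval A \<sigma> (MMul s t) = omul A (teval A \<sigma> s) (teval A \<sigma> t)"

text \<open>Sigma_0: variable 0 of the term is the slot for phi(u), variable i+1 is w_{i+1}.\<close>
definition Sigma0 :: "(nat set \<times> pw \<times> pw) set \<Rightarrow> nat set \<Rightarrow> (pw \<times> pw) set" where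
  "Sigma0 Sig A = {(teval A (case_nat (\<phi> u) (\<lambda>i. ws ! i)) t, teval A (case_nat (\<phi> v) (\<lambda>i. ws ! i)) t)
      | B u v \<phi> t ws. ((B, u, v) \<in> Sig \<or> (B, v, u) \<in> Sig) \<and> cont_hom B A \<phi>
          \<and> mvars t \<subseteq> {..length ws} \<and> set ws \<subseteq> Omega A}"

definition pclos :: "nat set \<Rightarrow> (pw \<times> pw) set \<Rightarrow> (pw \<times> pw) set" where
  "pclos A P = {(u, v). u \<in> Omega A \<and> v \<in> Omega A \<and>
      (\<forall>F. finite F \<and> F \<subseteq> tests A \<longrightarrow> (\<exists>(u', v')\<in>P. agree F u u' \<and> agree F v v'))}"

text \<open>The union of the transfinite chain Sigma_alpha equals the least superset of Sigma_0
closed under transitive and topological closure.\<close>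
definition provable :: "(nat set \<times> pw \<times> pw) set \<Rightarrow> nat set \<Rightarrow> (pw \<times> pw) set" where
  "provable Sig A = \<Inter> {P. Sigma0 Sig A \<subseteq> P \<and> trans P \<and> pclos A P \<subseteq> P}"

definition h_strong :: "(nat set \<times> pw \<times> pw) set \<Rightarrow> bool" where
  "h_strong Sig \<longleftrightarrow> (\<forall>B u v. finite B \<and> u \<in> Omega B \<and> v \<in> Omega B
      \<and> (\<forall>T\<in>models Sig. psat T (B, u, v)) \<longrightarrow> (u, v) \<in> provable Sig B)"

end

theory Submission imports Defs "HOL-Library.Nat_Bijection" "HOL-Algebra.Coset" begin


definition om :: "nat monoid \<Rightarrow> nat \<Rightarrow> nat" where
  "om T x = x [^]\<^bsub>T\<^esub> (fact (card (carrier T)) :: nat)"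

definition omm :: "nat monoid \<Rightarrow> nat \<Rightarrow> nat" where
  "omm T x = x [^]\<^bsub>T\<^esub> (2 * fact (card (carrier T)) - 1 :: nat)"

context monoid begin

lemma card_pos: "finite (carrier G) \<Longrightarrow> card (carrier G) \<ge> 1"
  using one_closed by (metis One_nat_def Suc_leI card_gt_0_iff empty_iff)

lemma pow_collision:
  assumes fin: "finite (carrier G)" and x: "x \<in> carrier G"
  shows "\<exists>i j. i < j \<and> j \<le> card (carrier G) \<and> x [^] i = x [^] (j::nat)"
proof -
  let ?n = "card (carrier G)"
  have "(\<lambda>k::nat. x [^] k) ` {0..?n} \<subseteq> carrier G" using x by auto
  hence "card ((\<lambda>k::nat. x [^] k) ` {0..?n}) \<le> ?n" using fin by (simp add: card_mono)
  hence "\<not> inj_on (\<lambda>k::nat. x [^] k) {0..?n}"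
    by (metis card_atLeastAtMost card_image diff_zero n_not_Suc_n le_antisym le_SucI order_refl)
  then obtain i j where ij: "i \<in> {0..?n}" "j \<in> {0..?n}" "i \<noteq> j" "x [^] i = x [^] (j::nat)"
    unfolding inj_on_def by blast
  show ?thesis
  proof (cases "i < j")
    case True thus ?thesis using ij by auto
  next
    case False hence "j < i" using ij by auto
    thus ?thesis using ij by (metis atLeastAtMost_iff)
  qed
qed

lemma pow_period:
  assumes x: "x \<in> carrier G" and e: "x [^] i = x [^] (i + p::nat)" and m: "m \<ge> i"
  shows "x [^] (m + k * p) = x [^] m"
proof (induction k)
  case 0 thus ?case by simp
next
  case (Suc k)
  have "x [^] (m + Suc k * p) = x [^] (m - i + k*p) \<otimes> x [^] (i + p)"
    using x m by (simp add: nat_pow_mult algebra_simps)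
  also have "\<dots> = x [^] (m - i + k*p) \<otimes> x [^] i" using e by simp
  also have "\<dots> = x [^] (m + k*p)" using x m by (simp add: nat_pow_mult algebra_simps)
  finally show ?case using Suc by simp
qed

lemma pow_fact_idem:
  assumes fin: "finite (carrier G)" and x: "x \<in> carrier G"
  shows "x [^] (fact (card (carrier G)) :: nat) \<otimes> x [^] (fact (card (carrier G)) :: nat)
         = x [^] (fact (card (carrier G)) :: nat)"
proof -
  let ?n = "card (carrier G)"
  let ?N = "fact ?n :: nat"
  obtain i j where ij: "i < j" "j \<le> ?n" "x [^] i = x [^] (j::nat)"
    using pow_collision[OF fin x] by blast
  define p where "p = j - i"
  have p1: "p \<ge> 1" "p \<le> ?n" using ij p_def by auto
  have e: "x [^] i = x [^] (i + p)" using ij p_def by simp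
  have "?n \<le> ?N" by (rule fact_ge_self)
  hence iN: "i \<le> ?N" using ij by simp
  have "p dvd ?N" using p1 by (simp add: dvd_fact)
  then obtain k where k: "?N = k * p" by (metis dvd_def mult.commute)
  have "x [^] ?N \<otimes> x [^] ?N = x [^] (?N + k * p)" using x k by (simp add: nat_pow_mult)
  also have "\<dots> = x [^] ?N" by (rule pow_period[OF x e iN])
  finally show ?thesis .
qed

lemma pow_idem_mult:
  assumes x: "x \<in> carrier G" and e: "x [^] (N::nat) \<otimes> x [^] N = x [^] N" and k: "k \<ge> 1"
  shows "x [^] (k * N) = x [^] N"
  using k
proof (induction k)
  case 0 thus ?case by simp
next
  case (Suc k)
  show ?case
  proof (cases "k = 0")
    case True thus ?thesis by simp
  next
    case False
    hence "x [^] (k * N) = x [^] N" using Suc by simp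
    moreover have "x [^] (Suc k * N) = x [^] (k * N) \<otimes> x [^] N" using x
      by (simp add: nat_pow_mult add.commute)
    ultimately show ?thesis using e by simp
  qed
qed

lemma pow_dvd_fact:
  assumes fin: "finite (carrier G)" and x: "x \<in> carrier G"
    and d: "fact (card (carrier G)) dvd L" and L: "L > 0"
  shows "x [^] (L::nat) = x [^] (fact (card (carrier G)) :: nat)"
proof -
  obtain k where k: "L = k * fact (card (carrier G))" using d by (metis dvd_def mult.commute)
  hence "k \<ge> 1" using L by (cases k) auto
  thus ?thesis using k pow_idem_mult[OF x pow_fact_idem[OF fin x]] by simp
qed

lemma idem_pow_unique:
  assumes x: "x \<in> carrier G" and a: "a \<ge> 1" "b \<ge> 1"
    and ea: "x [^] (a::nat) \<otimes> x [^] a = x [^] a" and eb: "x [^] (b::nat) \<otimes> x [^] b = x [^] b"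
  shows "x [^] a = x [^] b"
proof -
  have "x [^] a = x [^] (b * a)" using pow_idem_mult[OF x ea, of b] a by simp
  also have "\<dots> = x [^] (a * b)" by (simp add: mult.commute)
  also have "\<dots> = x [^] b" using pow_idem_mult[OF x eb, of a] a by simp
  finally show ?thesis .
qed

end



lemma tests_iff: "(T, f) \<in> tests A \<longleftrightarrow> monoid T \<and> finite (carrier T) \<and> f ` A \<subseteq> carrier T"
  by (simp add: tests_def)

lemma OmegaI:
  assumes "\<And>T (f::nat\<Rightarrow>nat). (T, f) \<in> tests A \<Longrightarrow> w T f \<in> carrier T"
    and "\<And>T (f::nat\<Rightarrow>nat). (T, f) \<notin> tests A \<Longrightarrow> w T f = undefined"
    and "\<And>T f g. (\<forall>a\<in>A. f a = g a) \<Longrightarrow> (T, f) \<in> tests A \<Longrightarrow> (T, g) \<in> tests A \<Longrightarrow> w T f = w T g"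
    and "\<And>T f T' h. (T, f) \<in> tests A \<Longrightarrow> monoid T' \<Longrightarrow> finite (carrier T') \<Longrightarrow> mhom h T T'
        \<Longrightarrow> w T' (h \<circ> f) = h (w T f)"
  shows "w \<in> Omega A"
proof -
  have "\<forall>T f g. (\<forall>a\<in>A. f a = g a) \<longrightarrow> w T f = w T g"
  proof (intro allI impI)
    fix T and f g :: "nat \<Rightarrow> nat" assume fg: "\<forall>a\<in>A. f a = g a"
    have "(T, f) \<in> tests A \<longleftrightarrow> (T, g) \<in> tests A" using fg by (auto simp: tests_def image_subset_iff)
    thus "w T f = w T g" using assms(2,3) fg by metis
  qed
  thus ?thesis unfolding Omega_def using assms by blast
qed

lemma Omega_carrier: "w \<in> Omega A \<Longrightarrow> (T, f) \<in> tests A \<Longrightarrow> w T f \<in> carrier T"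
  unfolding Omega_def by blast
lemma Omega_undef: "w \<in> Omega A \<Longrightarrow> (T, f) \<notin> tests A \<Longrightarrow> w T f = undefined"
  unfolding Omega_def by blast
lemma Omega_agree: "w \<in> Omega A \<Longrightarrow> \<forall>a\<in>A. f a = g a \<Longrightarrow> w T f = w T g"
  unfolding Omega_def by blast
lemma Omega_nat: "w \<in> Omega A \<Longrightarrow> (T, f) \<in> tests A \<Longrightarrow> monoid T' \<Longrightarrow> finite (carrier T') \<Longrightarrow> mhom h T T'
        \<Longrightarrow> w T' (h \<circ> f) = h (w T f)"
  unfolding Omega_def by blast

lemma Omega_eqI:
  assumes "u \<in> Omega A" "v \<in> Omega A" "\<And>T f. (T, f) \<in> tests A \<Longrightarrow> u T f = v T f"
  shows "u = v"
proof (intro ext)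
  fix T f show "u T f = v T f"
    using assms Omega_undef[OF assms(1), of T f] Omega_undef[OF assms(2), of T f] by (cases "(T,f) \<in> tests A") auto
qed

lemma mhom_tests: "(T, f) \<in> tests A \<Longrightarrow> monoid T' \<Longrightarrow> finite (carrier T') \<Longrightarrow> mhom h T T' \<Longrightarrow> (T', h \<circ> f) \<in> tests A"
  unfolding tests_def mhom_def by (auto simp: Pi_def)

lemma mhom_pow: "mhom h T T' \<Longrightarrow> monoid T \<Longrightarrow> x \<in> carrier T \<Longrightarrow> h (x [^]\<^bsub>T\<^esub> (n::nat)) = h x [^]\<^bsub>T'\<^esub> n"
  by (induction n) (auto simp: mhom_def monoid.nat_pow_closed)

lemma mhom_mult: "mhom h T T' \<Longrightarrow> x \<in> carrier T \<Longrightarrow> y \<in> carrier T \<Longrightarrow> h (x \<otimes>\<^bsub>T\<^esub> y) = h x \<otimes>\<^bsub>T'\<^esub> h y"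
  by (simp add: mhom_def)
lemma mhom_one: "mhom h T T' \<Longrightarrow> h \<one>\<^bsub>T\<^esub> = \<one>\<^bsub>T'\<^esub>"
  by (simp add: mhom_def)
lemma mhom_carrier: "mhom h T T' \<Longrightarrow> x \<in> carrier T \<Longrightarrow> h x \<in> carrier T'"
  by (auto simp: mhom_def)

lemma omul_test[simp]: "(T, f) \<in> tests A \<Longrightarrow> omul A u v T f = u T f \<otimes>\<^bsub>T\<^esub> v T f"
  by (simp add: omul_def)
lemma oone_test[simp]: "(T, f) \<in> tests A \<Longrightarrow> oone A T f = \<one>\<^bsub>T\<^esub>"
  by (simp add: oone_def)

lemma omul_Omega: assumes "u \<in> Omega A" "v \<in> Omega A" shows "omul A u v \<in> Omega A"
proof (rule OmegaI)
  fix T f assume t: "(T, f) \<in> tests A"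
  thus "omul A u v T f \<in> carrier T" using assms Omega_carrier[of _ A T f]
    by (simp add: tests_def monoid.m_closed)
next
  fix T f assume "(T, f) \<notin> tests A" thus "omul A u v T f = undefined" by (simp add: omul_def)
next
  fix T f g assume "\<forall>a\<in>A. f a = g a" "(T, f) \<in> tests A" "(T, g) \<in> tests A"
  thus "omul A u v T f = omul A u v T g" using assms Omega_agree by (metis omul_test)
next
  fix T f T' h assume t: "(T, f) \<in> tests A" and m: "monoid T'" "finite (carrier T')" "mhom h T T'"
  have t': "(T', h \<circ> f) \<in> tests A" using mhom_tests t m by blast
  show "omul A u v T' (h \<circ> f) = h (omul A u v T f)"
    using t t' m assms by (simp add: Omega_nat Omega_carrier mhom_mult)
qed

lemma oone_Omega: "oone A \<in> Omega A"
proof (rule OmegaI)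
  fix T f assume "(T, f) \<in> tests A" thus "oone A T f \<in> carrier T" by (simp add: tests_def monoid.one_closed)
next
  fix T f assume "(T, f) \<notin> tests A" thus "oone A T f = undefined" by (simp add: oone_def)
next
  fix T f g assume "(T, f) \<in> tests A" "(T, g) \<in> tests A" thus "oone A T f = oone A T g" by simp
next
  fix T f T' h assume t: "(T, f) \<in> tests A" and m: "monoid T'" "finite (carrier T')" "mhom h T T'"
  thus "oone A T' (h \<circ> f) = h (oone A T f)" using mhom_tests[OF t m] by (simp add: mhom_one)
qed

definition gen :: "nat set \<Rightarrow> nat \<Rightarrow> pw" where
  "gen A c = (\<lambda>T f. if (T, f) \<in> tests A then f c else undefined)"

lemma gen_test[simp]: "(T, f) \<in> tests A \<Longrightarrow> gen A c T f = f c"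
  by (simp add: gen_def)

lemma gen_Omega: assumes c: "c \<in> A" shows "gen A c \<in> Omega A"
proof (rule OmegaI)
  fix T f assume "(T, f) \<in> tests A" thus "gen A c T f \<in> carrier T" using c by (auto simp: tests_def)
next
  fix T f assume "(T, f) \<notin> tests A" thus "gen A c T f = undefined" by (simp add: gen_def)
next
  fix T f g assume "\<forall>a\<in>A. f a = g a" "(T, f) \<in> tests A" "(T, g) \<in> tests A"
  thus "gen A c T f = gen A c T g" using c by simp
next
  fix T f T' h assume t: "(T, f) \<in> tests A" and m: "monoid T'" "finite (carrier T')" "mhom h T T'"
  thus "gen A c T' (h \<circ> f) = h (gen A c T f)" using mhom_tests[OF t m] by simp
qed

lemma (in monoid) omm_unique:
  assumes x: "x \<in> carrier G" and a: "a \<ge> 1" "b \<ge> 1"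
    and ea: "x [^] (a::nat) \<otimes> x [^] a = x [^] a" and eb: "x [^] (b::nat) \<otimes> x [^] b = x [^] b"
  shows "x [^] (2*a - 1) = x [^] (2*b - 1)"
proof -
  have ab: "x [^] a = x [^] b" by (rule idem_pow_unique[OF x a ea eb])
  have "x [^] (2*a - 1) = x [^] (a - 1) \<otimes> x [^] a" using x a nat_pow_mult[of x "a-1" a]
    by (simp add: mult_2)
  also have "\<dots> = x [^] (a - 1) \<otimes> x [^] b" using ab by simp
  also have "\<dots> = x [^] (b - 1) \<otimes> x [^] a" using x a by (simp add: nat_pow_mult add.commute)
  also have "\<dots> = x [^] (b - 1) \<otimes> x [^] b" using ab by simp
  also have "\<dots> = x [^] (2*b - 1)" using x a nat_pow_mult[of x "b-1" b] by (simp add: mult_2)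
  finally show ?thesis .
qed

lemma fact_ge1: "(fact n :: nat) \<ge> 1" by (simp add: Suc_leI fact_gt_zero)

lemma om_hom:
  assumes T: "monoid T" "finite (carrier T)" and T': "monoid T'" "finite (carrier T')"
    and h: "mhom h T T'" and x: "x \<in> carrier T"
  shows "h (om T x) = om T' (h x)"
proof -
  let ?N = "fact (card (carrier T)) :: nat" and ?N' = "fact (card (carrier T')) :: nat"
  have hx: "h x \<in> carrier T'" using h x by (rule mhom_carrier)
  have "h (om T x) = h x [^]\<^bsub>T'\<^esub> ?N" unfolding om_def using mhom_pow[OF h T(1) x] .
  moreover have "h x [^]\<^bsub>T'\<^esub> ?N \<otimes>\<^bsub>T'\<^esub> h x [^]\<^bsub>T'\<^esub> ?N = h x [^]\<^bsub>T'\<^esub> ?N"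
  proof -
    have "x [^]\<^bsub>T\<^esub> ?N \<otimes>\<^bsub>T\<^esub> x [^]\<^bsub>T\<^esub> ?N = x [^]\<^bsub>T\<^esub> ?N"
      using monoid.pow_fact_idem[OF T x] .
    hence "h (x [^]\<^bsub>T\<^esub> ?N \<otimes>\<^bsub>T\<^esub> x [^]\<^bsub>T\<^esub> ?N) = h (x [^]\<^bsub>T\<^esub> ?N)" by simp
    thus ?thesis using mhom_mult[OF h] mhom_pow[OF h T(1) x] x T(1) by (simp add: monoid.nat_pow_closed)
  qed
  moreover have "h x [^]\<^bsub>T'\<^esub> ?N' \<otimes>\<^bsub>T'\<^esub> h x [^]\<^bsub>T'\<^esub> ?N' = h x [^]\<^bsub>T'\<^esub> ?N'"
    using monoid.pow_fact_idem[OF T' hx] .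
  ultimately show ?thesis unfolding om_def using monoid.idem_pow_unique[OF T'(1) hx fact_ge1 fact_ge1] by simp
qed

lemma omm_hom:
  assumes T: "monoid T" "finite (carrier T)" and T': "monoid T'" "finite (carrier T')"
    and h: "mhom h T T'" and x: "x \<in> carrier T"
  shows "h (omm T x) = omm T' (h x)"
proof -
  let ?N = "fact (card (carrier T)) :: nat" and ?N' = "fact (card (carrier T')) :: nat"
  have hx: "h x \<in> carrier T'" using h x by (rule mhom_carrier)
  have "h (omm T x) = h x [^]\<^bsub>T'\<^esub> (2 * ?N - 1)" unfolding omm_def using mhom_pow[OF h T(1) x] .
  moreover have "h x [^]\<^bsub>T'\<^esub> ?N \<otimes>\<^bsub>T'\<^esub> h x [^]\<^bsub>T'\<^esub> ?N = h x [^]\<^bsub>T'\<^esub> ?N"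
  proof -
    have "x [^]\<^bsub>T\<^esub> ?N \<otimes>\<^bsub>T\<^esub> x [^]\<^bsub>T\<^esub> ?N = x [^]\<^bsub>T\<^esub> ?N"
      using monoid.pow_fact_idem[OF T x] .
    hence "h (x [^]\<^bsub>T\<^esub> ?N \<otimes>\<^bsub>T\<^esub> x [^]\<^bsub>T\<^esub> ?N) = h (x [^]\<^bsub>T\<^esub> ?N)" by simp
    thus ?thesis using mhom_mult[OF h] mhom_pow[OF h T(1) x] x T(1) by (simp add: monoid.nat_pow_closed)
  qed
  moreover have "h x [^]\<^bsub>T'\<^esub> ?N' \<otimes>\<^bsub>T'\<^esub> h x [^]\<^bsub>T'\<^esub> ?N' = h x [^]\<^bsub>T'\<^esub> ?N'"
    using monoid.pow_fact_idem[OF T' hx] .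
  ultimately have "h (omm T x) = h x [^]\<^bsub>T'\<^esub> (2 * ?N' - 1)"
    using monoid.omm_unique[OF T'(1) hx fact_ge1 fact_ge1, of "card (carrier T)" "card (carrier T')"] by metis
  thus ?thesis unfolding omm_def .
qed

definition oom :: "nat set \<Rightarrow> pw \<Rightarrow> pw" where
  "oom A u = (\<lambda>T f. if (T, f) \<in> tests A then om T (u T f) else undefined)"
definition oomm :: "nat set \<Rightarrow> pw \<Rightarrow> pw" where
  "oomm A u = (\<lambda>T f. if (T, f) \<in> tests A then omm T (u T f) else undefined)"

lemma oom_test[simp]: "(T, f) \<in> tests A \<Longrightarrow> oom A u T f = om T (u T f)"
  by (simp add: oom_def)
lemma oomm_test[simp]: "(T, f) \<in> tests A \<Longrightarrow> oomm A u T f = omm T (u T f)"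
  by (simp add: oomm_def)

lemma oom_Omega: assumes u: "u \<in> Omega A" shows "oom A u \<in> Omega A"
proof (rule OmegaI)
  fix T f assume "(T, f) \<in> tests A" thus "oom A u T f \<in> carrier T"
    using Omega_carrier[OF u] by (simp add: tests_def om_def monoid.nat_pow_closed)
next
  fix T f assume "(T, f) \<notin> tests A" thus "oom A u T f = undefined" by (simp add: oom_def)
next
  fix T f g assume "\<forall>a\<in>A. f a = g a" "(T, f) \<in> tests A" "(T, g) \<in> tests A"
  thus "oom A u T f = oom A u T g" using Omega_agree[OF u, of f g T] by simp
next
  fix T f T' h assume t: "(T, f) \<in> tests A" and m: "monoid T'" "finite (carrier T')" "mhom h T T'"
  have t': "(T', h \<circ> f) \<in> tests A" using mhom_tests[OF t m] .
  have "u T' (h \<circ> f) = h (u T f)" by (rule Omega_nat[OF u t m])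
  moreover have "h (om T (u T f)) = om T' (h (u T f))"
    using om_hom[OF _ _ m(1,2,3) Omega_carrier[OF u t]] t by (simp add: tests_def)
  ultimately show "oom A u T' (h \<circ> f) = h (oom A u T f)" using t t' by simp
qed

lemma oomm_Omega: assumes u: "u \<in> Omega A" shows "oomm A u \<in> Omega A"
proof (rule OmegaI)
  fix T f assume "(T, f) \<in> tests A" thus "oomm A u T f \<in> carrier T"
    using Omega_carrier[OF u] by (simp add: tests_def omm_def monoid.nat_pow_closed)
next
  fix T f assume "(T, f) \<notin> tests A" thus "oomm A u T f = undefined" by (simp add: oomm_def)
next
  fix T f g assume "\<forall>a\<in>A. f a = g a" "(T, f) \<in> tests A" "(T, g) \<in> tests A"
  thus "oomm A u T f = oomm A u T g" using Omega_agree[OF u, of f g T] by simp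
next
  fix T f T' h assume t: "(T, f) \<in> tests A" and m: "monoid T'" "finite (carrier T')" "mhom h T T'"
  have t': "(T', h \<circ> f) \<in> tests A" using mhom_tests[OF t m] .
  have "u T' (h \<circ> f) = h (u T f)" by (rule Omega_nat[OF u t m])
  moreover have "h (omm T (u T f)) = omm T' (h (u T f))"
    using omm_hom[OF _ _ m(1,2,3) Omega_carrier[OF u t]] t by (simp add: tests_def)
  ultimately show "oomm A u T' (h \<circ> f) = h (oomm A u T f)" using t t' by simp
qed

fun opow :: "nat set \<Rightarrow> pw \<Rightarrow> nat \<Rightarrow> pw" where
  "opow A u 0 = oone A"
| "opow A u (Suc k) = omul A (opow A u k) u"

lemma opow_Omega: "u \<in> Omega A \<Longrightarrow> opow A u k \<in> Omega A"
  by (induction k) (auto intro: omul_Omega oone_Omega)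

lemma opow_test: "(T, f) \<in> tests A \<Longrightarrow> opow A u k T f = u T f [^]\<^bsub>T\<^esub> k"
  by (induction k) auto



section \<open>Transport of finite monoids to nat\<close>

lemma transport:
  fixes M :: "('a, 'b) monoid_scheme"
  assumes M: "monoid M" and fin: "finite (carrier M)"
  shows "\<exists>(T::nat monoid) \<iota>. monoid T \<and> finite (carrier T) \<and> carrier T = \<iota> ` carrier M \<and> inj_on \<iota> (carrier M)
     \<and> (\<forall>x\<in>carrier M. \<forall>y\<in>carrier M. \<iota> (x \<otimes>\<^bsub>M\<^esub> y) = \<iota> x \<otimes>\<^bsub>T\<^esub> \<iota> y) \<and> \<iota> \<one>\<^bsub>M\<^esub> = \<one>\<^bsub>T\<^esub>"
proof -
  obtain \<iota> :: "'a \<Rightarrow> nat" and n where \<iota>: "inj_on \<iota> (carrier M)"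
    using finite_imp_inj_to_nat_seg[OF fin] by blast
  let ?C = "carrier M"
  let ?r = "inv_into ?C \<iota>"
  define T :: "nat monoid" where "T = \<lparr>carrier = \<iota> ` ?C, mult = (\<lambda>a b. \<iota> (?r a \<otimes>\<^bsub>M\<^esub> ?r b)), one = \<iota> \<one>\<^bsub>M\<^esub>\<rparr>"
  have r: "\<And>x. x \<in> ?C \<Longrightarrow> ?r (\<iota> x) = x" using \<iota> by (simp add: inv_into_f_f)
  have hom: "\<forall>x\<in>?C. \<forall>y\<in>?C. \<iota> (x \<otimes>\<^bsub>M\<^esub> y) = \<iota> x \<otimes>\<^bsub>T\<^esub> \<iota> y"
    by (simp add: T_def r)
  have "monoid T"
  proof (rule monoidI)
    fix x y assume "x \<in> carrier T" "y \<in> carrier T"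
    thus "x \<otimes>\<^bsub>T\<^esub> y \<in> carrier T" by (auto simp: T_def r monoid.m_closed[OF M])
  next
    show "\<one>\<^bsub>T\<^esub> \<in> carrier T" by (simp add: T_def monoid.one_closed[OF M])
  next
    fix x y z assume "x \<in> carrier T" "y \<in> carrier T" "z \<in> carrier T"
    thus "x \<otimes>\<^bsub>T\<^esub> y \<otimes>\<^bsub>T\<^esub> z = x \<otimes>\<^bsub>T\<^esub> (y \<otimes>\<^bsub>T\<^esub> z)"
      by (auto simp: T_def r monoid.m_closed[OF M] monoid.m_assoc[OF M])
  next
    fix x assume "x \<in> carrier T"
    thus "\<one>\<^bsub>T\<^esub> \<otimes>\<^bsub>T\<^esub> x = x" by (auto simp: T_def r monoid.one_closed[OF M] monoid.l_one[OF M])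
  next
    fix x assume "x \<in> carrier T"
    thus "x \<otimes>\<^bsub>T\<^esub> \<one>\<^bsub>T\<^esub> = x" by (auto simp: T_def r monoid.one_closed[OF M] monoid.r_one[OF M])
  qed
  moreover have "finite (carrier T)" using fin by (simp add: T_def)
  ultimately show ?thesis using \<iota> hom by (intro exI[of _ T] exI[of _ \<iota>]) (simp add: T_def)
qed

definition wval :: "nat monoid \<Rightarrow> (nat \<Rightarrow> nat) \<Rightarrow> nat set \<Rightarrow> nat list \<Rightarrow> nat" where
  "wval T f A l = foldr (\<lambda>c acc. f c \<otimes>\<^bsub>T\<^esub> acc) (filter (\<lambda>c. c \<in> A) l) \<one>\<^bsub>T\<^esub>"

definition wv :: "nat set \<Rightarrow> nat list \<Rightarrow> pw" where
  "wv A l = foldr (\<lambda>c acc. omul A (gen A c) acc) (filter (\<lambda>c. c \<in> A) l) (oone A)"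

lemma wval_Nil[simp]: "wval T f A [] = \<one>\<^bsub>T\<^esub>" by (simp add: wval_def)
lemma wval_Cons: "wval T f A (c # l) = (if c \<in> A then f c \<otimes>\<^bsub>T\<^esub> wval T f A l else wval T f A l)"
  by (simp add: wval_def)
lemma wv_Nil[simp]: "wv A [] = oone A" by (simp add: wv_def)
lemma wv_Cons: "wv A (c # l) = (if c \<in> A then omul A (gen A c) (wv A l) else wv A l)"
  by (simp add: wv_def)

lemma wval_carrier: "(T, f) \<in> tests A \<Longrightarrow> wval T f A l \<in> carrier T"
  by (induction l) (auto simp: wval_Cons tests_def monoid.m_closed)

lemma wval_append: "(T, f) \<in> tests A \<Longrightarrow> wval T f A (l1 @ l2) = wval T f A l1 \<otimes>\<^bsub>T\<^esub> wval T f A l2"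
proof (induction l1)
  case Nil thus ?case using wval_carrier[OF Nil] by (simp add: tests_def)
next
  case (Cons c l) thus ?case using wval_carrier[OF Cons(2)]
    by (auto simp: wval_Cons tests_def monoid.m_assoc)
qed

lemma wval_single: "(T, f) \<in> tests A \<Longrightarrow> c \<in> A \<Longrightarrow> wval T f A [c] = f c"
  by (auto simp: wval_Cons tests_def)

lemma wv_Omega: "wv A l \<in> Omega A"
  by (induction l) (auto simp: wv_Cons intro: omul_Omega oone_Omega gen_Omega)

lemma wv_test: "(T, f) \<in> tests A \<Longrightarrow> wv A l T f = wval T f A l"
  by (induction l) (auto simp: wv_Cons wval_Cons)

section \<open>Density\<close>

lemma density:
  assumes z: "z \<in> Omega A" and G: "finite G" "G \<subseteq> tests A"
  shows "\<exists>l. \<forall>(T, f)\<in>G. z T f = wval T f A l"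
proof -
  define P :: "((nat monoid \<times> (nat \<Rightarrow> nat)) \<Rightarrow> nat) monoid" where
    "P = \<lparr>carrier = {restrict (\<lambda>g. wval (fst g) (snd g) A l) G | l. True},
          mult = (\<lambda>x y. restrict (\<lambda>g. x g \<otimes>\<^bsub>fst g\<^esub> y g) G),
          one = restrict (\<lambda>g. \<one>\<^bsub>fst g\<^esub>) G\<rparr>"
  let ?w = "\<lambda>l. restrict (\<lambda>g. wval (fst g) (snd g) A l) G"
  have tG: "\<And>g. g \<in> G \<Longrightarrow> (fst g, snd g) \<in> tests A" using G by auto
  have mul: "?w l1 \<otimes>\<^bsub>P\<^esub> ?w l2 = ?w (l1 @ l2)" for l1 l2
  proof (rule ext)
    fix g show "(?w l1 \<otimes>\<^bsub>P\<^esub> ?w l2) g = ?w (l1 @ l2) g"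
      using wval_append[OF tG, of g l1 l2] by (cases "g \<in> G") (auto simp: P_def)
  qed
  have P_one: "\<one>\<^bsub>P\<^esub> = ?w []" by (auto simp: P_def intro!: ext)
  have carP: "carrier P = range ?w" by (auto simp: P_def)
  have mP: "monoid P"
  proof (rule monoidI)
    fix x y assume "x \<in> carrier P" "y \<in> carrier P"
    thus "x \<otimes>\<^bsub>P\<^esub> y \<in> carrier P" unfolding carP using mul by auto
  next
    show "\<one>\<^bsub>P\<^esub> \<in> carrier P" unfolding carP P_one by (rule rangeI)
  next
    fix x y z assume "x \<in> carrier P" "y \<in> carrier P" "z \<in> carrier P"
    thus "x \<otimes>\<^bsub>P\<^esub> y \<otimes>\<^bsub>P\<^esub> z = x \<otimes>\<^bsub>P\<^esub> (y \<otimes>\<^bsub>P\<^esub> z)" unfolding carP using mul by auto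
  next
    fix x assume "x \<in> carrier P"
    thus "\<one>\<^bsub>P\<^esub> \<otimes>\<^bsub>P\<^esub> x = x" unfolding carP P_one using mul by (auto simp del: wval_Nil)
  next
    fix x assume "x \<in> carrier P"
    thus "x \<otimes>\<^bsub>P\<^esub> \<one>\<^bsub>P\<^esub> = x" unfolding carP P_one using mul by (auto simp del: wval_Nil)
  qed
  have finP: "finite (carrier P)"
  proof (rule finite_subset)
    show "carrier P \<subseteq> PiE G (\<lambda>g. carrier (fst g))"
      unfolding carP using wval_carrier[OF tG] by auto
    show "finite (PiE G (\<lambda>g. carrier (fst g)))" using G tG by (intro finite_PiE) (auto simp: tests_def)
  qed
  obtain M :: "nat monoid" and \<iota> where M: "monoid M" "finite (carrier M)" "carrier M = \<iota> ` carrier P"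
    "inj_on \<iota> (carrier P)" "\<forall>x\<in>carrier P. \<forall>y\<in>carrier P. \<iota> (x \<otimes>\<^bsub>P\<^esub> y) = \<iota> x \<otimes>\<^bsub>M\<^esub> \<iota> y"
    "\<iota> \<one>\<^bsub>P\<^esub> = \<one>\<^bsub>M\<^esub>"
    using transport[OF mP finP] by blast
  define f' where "f' c = \<iota> (?w [c])" for c
  have tM: "(M, f') \<in> tests A" using M by (auto simp: tests_def f'_def carP)
  have zM: "z M f' \<in> carrier M" by (rule Omega_carrier[OF z tM])
  then obtain l where l: "z M f' = \<iota> (?w l)" using M(3) carP by auto
  have "\<forall>(T, f)\<in>G. z T f = wval T f A l"
  proof (clarify)
    fix T f assume g: "(T, f) \<in> G"
    have t: "(T, f) \<in> tests A" using g G by auto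
    define p where "p m = (inv_into (carrier P) \<iota> m) (T, f)" for m
    have pw: "p (\<iota> (?w l')) = wval T f A l'" for l'
      using M(4) g by (simp add: p_def carP inv_into_f_f)
    have hp: "mhom p M T"
      unfolding mhom_def
    proof (intro conjI ballI)
      show "p \<in> carrier M \<rightarrow> carrier T" using M(3) pw wval_carrier[OF t] by (auto simp: carP)
    next
      fix x y assume "x \<in> carrier M" "y \<in> carrier M"
      then obtain l1 l2 where xy: "x = \<iota> (?w l1)" "y = \<iota> (?w l2)" using M(3) carP by auto
      have c: "?w l1 \<in> carrier P" "?w l2 \<in> carrier P" unfolding carP by (rule rangeI)+
      have e1: "\<iota> (?w l1 \<otimes>\<^bsub>P\<^esub> ?w l2) = \<iota> (?w l1) \<otimes>\<^bsub>M\<^esub> \<iota> (?w l2)" using M(5) c by blast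
      have "x \<otimes>\<^bsub>M\<^esub> y = \<iota> (?w (l1 @ l2))" unfolding xy e1[symmetric] mul[of l1 l2] ..
      hence "p (x \<otimes>\<^bsub>M\<^esub> y) = wval T f A (l1 @ l2)" using pw by simp
      also have "\<dots> = p x \<otimes>\<^bsub>T\<^esub> p y" using xy pw wval_append[OF t] by simp
      finally show "p (x \<otimes>\<^bsub>M\<^esub> y) = p x \<otimes>\<^bsub>T\<^esub> p y" .
    next
      show "p \<one>\<^bsub>M\<^esub> = \<one>\<^bsub>T\<^esub>" using M(6) P_one pw[of "[]"] by (simp del: wval_Nil) simp
    qed
    have "z T (p \<circ> f') = p (z M f')" using Omega_nat[OF z tM] t hp by (auto simp: tests_def)
    also have "\<dots> = wval T f A l" using l pw by simp
    finally have 1: "z T (p \<circ> f') = wval T f A l" .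
    have "\<forall>a\<in>A. (p \<circ> f') a = f a" using pw wval_single[OF t] by (simp add: f'_def)
    hence "z T (p \<circ> f') = z T f" using Omega_agree[OF z] by metis
    thus "z T f = wval T f A l" using 1 by simp
  qed
  thus ?thesis by blast
qed

lemma chf_carrier: "cont_hom_fin A T \<psi> \<Longrightarrow> z \<in> Omega A \<Longrightarrow> \<psi> z \<in> carrier T"
  unfolding cont_hom_fin_def by blast
lemma chf_mul: "cont_hom_fin A T \<psi> \<Longrightarrow> u \<in> Omega A \<Longrightarrow> v \<in> Omega A \<Longrightarrow> \<psi> (omul A u v) = \<psi> u \<otimes>\<^bsub>T\<^esub> \<psi> v"
  unfolding cont_hom_fin_def by blast
lemma chf_one: "cont_hom_fin A T \<psi> \<Longrightarrow> \<psi> (oone A) = \<one>\<^bsub>T\<^esub>"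
  unfolding cont_hom_fin_def by blast
lemma chf_cont: "cont_hom_fin A T \<psi> \<Longrightarrow> u \<in> Omega A \<Longrightarrow> \<exists>F. finite F \<and> F \<subseteq> tests A \<and>
               (\<forall>u'\<in>Omega A. agree F u u' \<longrightarrow> \<psi> u' = \<psi> u)"
  unfolding cont_hom_fin_def by blast

lemma agree_mono: "agree F u v \<Longrightarrow> G \<subseteq> F \<Longrightarrow> agree G u v"
  unfolding agree_def by blast

lemma uniqueness:
  assumes h1: "cont_hom_fin A T \<psi>1" and h2: "cont_hom_fin A T \<psi>2"
    and g: "\<forall>c\<in>A. \<psi>1 (gen A c) = \<psi>2 (gen A c)" and z: "z \<in> Omega A"
  shows "\<psi>1 z = \<psi>2 z"
proof -
  obtain F1 where F1: "finite F1" "F1 \<subseteq> tests A" "\<forall>u'\<in>Omega A. agree F1 z u' \<longrightarrow> \<psi>1 u' = \<psi>1 z"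
    using chf_cont[OF h1 z] by blast
  obtain F2 where F2: "finite F2" "F2 \<subseteq> tests A" "\<forall>u'\<in>Omega A. agree F2 z u' \<longrightarrow> \<psi>2 u' = \<psi>2 z"
    using chf_cont[OF h2 z] by blast
  obtain l where l: "\<forall>(T, f)\<in>F1 \<union> F2. z T f = wval T f A l"
    using density[OF z, of "F1 \<union> F2"] F1 F2 by auto
  have ag: "agree (F1 \<union> F2) z (wv A l)" unfolding agree_def using l F1 F2 wv_test by fastforce
  have w: "\<psi>1 (wv A l) = \<psi>2 (wv A l)"
  proof (induction l)
    case Nil thus ?case using chf_one[OF h1] chf_one[OF h2] by simp
  next
    case (Cons c l) thus ?case using chf_mul[OF h1] chf_mul[OF h2] g
      by (simp add: wv_Cons wv_Omega gen_Omega)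
  qed
  have "\<psi>1 z = \<psi>1 (wv A l)" using F1(3) wv_Omega agree_mono[OF ag, of F1] by simp
  also have "\<dots> = \<psi>2 (wv A l)" by (rule w)
  also have "\<dots> = \<psi>2 z" using F2(3) wv_Omega agree_mono[OF ag, of F2] by simp
  finally show ?thesis .
qed

lemma eval_chf: assumes t: "(T, f) \<in> tests A" shows "cont_hom_fin A T (\<lambda>z. z T f)"
  unfolding cont_hom_fin_def
proof (intro conjI ballI)
  show "(\<lambda>z. z T f) \<in> Omega A \<rightarrow> carrier T" using Omega_carrier t by blast
next
  fix u v assume "u \<in> Omega A" "v \<in> Omega A" thus "omul A u v T f = u T f \<otimes>\<^bsub>T\<^esub> v T f" using t by simp
next
  show "oone A T f = \<one>\<^bsub>T\<^esub>" using t by simp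
next
  fix u assume "u \<in> Omega A"
  show "\<exists>F. finite F \<and> F \<subseteq> tests A \<and> (\<forall>u'\<in>Omega A. agree F u u' \<longrightarrow> u' T f = u T f)"
    using t by (intro exI[of _ "{(T, f)}"]) (auto simp: agree_def)
qed

section \<open>Substitution\<close>

definition subst :: "nat set \<Rightarrow> (nat \<Rightarrow> pw) \<Rightarrow> pw \<Rightarrow> pw" where
  "subst B w z = (\<lambda>T f. if (T, f) \<in> tests B then z T (\<lambda>c. w c T f) else undefined)"

lemma subst_tests: "\<forall>c\<in>C. w c \<in> Omega B \<Longrightarrow> (T, f) \<in> tests B \<Longrightarrow> (T, (\<lambda>c. w c T f)) \<in> tests C"
  using Omega_carrier by (auto simp: tests_def)

lemma subst_test[simp]: "(T, f) \<in> tests B \<Longrightarrow> subst B w z T f = z T (\<lambda>c. w c T f)"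
  by (simp add: subst_def)

lemma subst_Omega:
  assumes w: "\<forall>c\<in>C. w c \<in> Omega B" and z: "z \<in> Omega C"
  shows "subst B w z \<in> Omega B"
proof (rule OmegaI)
  fix T f assume t: "(T, f) \<in> tests B"
  thus "subst B w z T f \<in> carrier T" using Omega_carrier[OF z subst_tests[OF w t]] by simp
next
  fix T f assume "(T, f) \<notin> tests B" thus "subst B w z T f = undefined" by (simp add: subst_def)
next
  fix T f g assume fg: "\<forall>a\<in>B. f a = g a" and t: "(T, f) \<in> tests B" "(T, g) \<in> tests B"
  have "\<forall>c\<in>C. w c T f = w c T g" using w Omega_agree fg by blast
  thus "subst B w z T f = subst B w z T g" using t Omega_agree[OF z, of "\<lambda>c. w c T f" "\<lambda>c. w c T g" T] by simp
next
  fix T f T' h assume t: "(T, f) \<in> tests B" and m: "monoid T'" "finite (carrier T')" "mhom h T T'"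
  have t': "(T', h \<circ> f) \<in> tests B" using mhom_tests[OF t m] .
  have "\<forall>c\<in>C. w c T' (h \<circ> f) = (h \<circ> (\<lambda>c. w c T f)) c" using w Omega_nat[OF _ t m] by simp
  hence "z T' (\<lambda>c. w c T' (h \<circ> f)) = z T' (h \<circ> (\<lambda>c. w c T f))"
    using Omega_agree[OF z, of "\<lambda>c. w c T' (h \<circ> f)" "h \<circ> (\<lambda>c. w c T f)" T'] by simp
  also have "\<dots> = h (z T (\<lambda>c. w c T f))" using Omega_nat[OF z subst_tests[OF w t] m] .
  finally show "subst B w z T' (h \<circ> f) = h (subst B w z T f)" using t t' by simp
qed

lemma subst_gen: "\<forall>c\<in>C. w c \<in> Omega B \<Longrightarrow> c \<in> C \<Longrightarrow> subst B w (gen C c) = w c"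
  by (rule Omega_eqI[where A=B]) (auto intro: subst_Omega gen_Omega simp: subst_tests)

lemma subst_cont_hom:
  assumes w: "\<forall>c\<in>C. w c \<in> Omega B"
  shows "cont_hom C B (subst B w)"
  unfolding cont_hom_def
proof (intro conjI ballI allI impI)
  show "subst B w \<in> Omega C \<rightarrow> Omega B" using subst_Omega[OF w] by blast
next
  fix u v assume u: "u \<in> Omega C" and v: "v \<in> Omega C"
  show "subst B w (omul C u v) = omul B (subst B w u) (subst B w v)"
    by (rule Omega_eqI[where A=B]) (auto intro!: subst_Omega[OF w] omul_Omega u v simp: subst_tests[OF w])
next
  show "subst B w (oone C) = oone B"
    by (rule Omega_eqI[where A=B]) (auto intro!: subst_Omega[OF w] oone_Omega simp: subst_tests[OF w])
next
  fix u G assume u: "u \<in> Omega C" and G: "finite G \<and> G \<subseteq> tests B"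
  let ?F = "(\<lambda>(T, f). (T, (\<lambda>c. w c T f))) ` G"
  have "finite ?F" "?F \<subseteq> tests C" using G subst_tests[OF w] by auto
  moreover have "\<forall>u'\<in>Omega C. agree ?F u u' \<longrightarrow> agree G (subst B w u) (subst B w u')"
  proof (intro ballI impI)
    fix u' assume a: "agree ?F u u'"
    show "agree G (subst B w u) (subst B w u')" unfolding agree_def
    proof (clarify)
      fix T f assume g: "(T, f) \<in> G"
      hence "(T, (\<lambda>c. w c T f)) \<in> ?F" by force
      hence "u T (\<lambda>c. w c T f) = u' T (\<lambda>c. w c T f)" using a unfolding agree_def by blast
      thus "subst B w u T f = subst B w u' T f" using g G by auto
    qed
  qed
  ultimately show "\<exists>F. finite F \<and> F \<subseteq> tests C \<and>
               (\<forall>u'\<in>Omega C. agree F u u' \<longrightarrow> agree G (subst B w u) (subst B w u'))" by blast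
qed

lemma ch_Omega: "cont_hom C B \<phi> \<Longrightarrow> z \<in> Omega C \<Longrightarrow> \<phi> z \<in> Omega B"
  unfolding cont_hom_def by (simp add: Pi_iff)

lemma comp_chf:
  assumes \<phi>: "cont_hom C B \<phi>" and \<kappa>: "cont_hom_fin B T \<kappa>"
  shows "cont_hom_fin C T (\<kappa> \<circ> \<phi>)"
  unfolding cont_hom_fin_def
proof (intro conjI ballI)
  show "\<kappa> \<circ> \<phi> \<in> Omega C \<rightarrow> carrier T" using ch_Omega[OF \<phi>] chf_carrier[OF \<kappa>] by auto
next
  fix u v assume "u \<in> Omega C" "v \<in> Omega C"
  thus "(\<kappa> \<circ> \<phi>) (omul C u v) = (\<kappa> \<circ> \<phi>) u \<otimes>\<^bsub>T\<^esub> (\<kappa> \<circ> \<phi>) v"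
    using \<phi> chf_mul[OF \<kappa>] ch_Omega[OF \<phi>] by (simp add: cont_hom_def)
next
  show "(\<kappa> \<circ> \<phi>) (oone C) = \<one>\<^bsub>T\<^esub>" using \<phi> chf_one[OF \<kappa>] by (simp add: cont_hom_def)
next
  fix u assume u: "u \<in> Omega C"
  obtain F1 where F1: "finite F1" "F1 \<subseteq> tests B" "\<forall>u'\<in>Omega B. agree F1 (\<phi> u) u' \<longrightarrow> \<kappa> u' = \<kappa> (\<phi> u)"
    using chf_cont[OF \<kappa> ch_Omega[OF \<phi> u]] by blast
  obtain F2 where F2: "finite F2" "F2 \<subseteq> tests C" "\<forall>u'\<in>Omega C. agree F2 u u' \<longrightarrow> agree F1 (\<phi> u) (\<phi> u')"
    using \<phi> u F1(1,2) unfolding cont_hom_def by meson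
  show "\<exists>F. finite F \<and> F \<subseteq> tests C \<and> (\<forall>u'\<in>Omega C. agree F u u' \<longrightarrow> (\<kappa> \<circ> \<phi>) u' = (\<kappa> \<circ> \<phi>) u)"
    using F1 F2 ch_Omega[OF \<phi>] by (intro exI[of _ F2]) auto
qed



lemma omul_assoc: "u \<in> Omega A \<Longrightarrow> v \<in> Omega A \<Longrightarrow> w \<in> Omega A \<Longrightarrow>
   omul A (omul A u v) w = omul A u (omul A v w)"
  by (rule Omega_eqI[where A=A]) (auto intro!: omul_Omega simp: Omega_carrier tests_def monoid.m_assoc)

lemma omul_one_l: "u \<in> Omega A \<Longrightarrow> omul A (oone A) u = u"
  by (rule Omega_eqI[where A=A]) (auto intro!: omul_Omega oone_Omega simp: Omega_carrier tests_def)
lemma omul_one_r: "u \<in> Omega A \<Longrightarrow> omul A u (oone A) = u"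
  by (rule Omega_eqI[where A=A]) (auto intro!: omul_Omega oone_Omega simp: Omega_carrier tests_def)

lemma agree_refl: "agree F x x" unfolding agree_def by auto

lemma agree_omul:
  assumes "agree F x x'" "agree F y y'" "F \<subseteq> tests A"
  shows "agree F (omul A x y) (omul A x' y')"
  unfolding agree_def
proof (clarify)
  fix T f assume "(T, f) \<in> F"
  moreover hence "x T f = x' T f" "y T f = y' T f" "(T, f) \<in> tests A"
    using assms unfolding agree_def by auto
  ultimately show "omul A x y T f = omul A x' y' T f" by simp
qed

lemma teval_Omega: "(\<forall>i\<in>mvars t. \<sigma> i \<in> Omega A) \<Longrightarrow> teval A \<sigma> t \<in> Omega A"
  by (induction t) (auto intro: omul_Omega oone_Omega)

lemma teval_cong: "(\<forall>i\<in>mvars t. \<sigma> i = \<tau> i) \<Longrightarrow> teval A \<sigma> t = teval A \<tau> t"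
  by (induction t) auto

section \<open>Provability\<close>

lemma prov_Sigma0: "Sigma0 Sig A \<subseteq> provable Sig A"
  unfolding provable_def by blast
lemma prov_trans: "trans (provable Sig A)"
  unfolding provable_def trans_def by blast
lemma prov_pclos: "pclos A (provable Sig A) \<subseteq> provable Sig A"
proof -
  have mono: "P \<subseteq> Q \<Longrightarrow> pclos A P \<subseteq> pclos A Q" for P Q unfolding pclos_def by blast
  show ?thesis unfolding provable_def using mono[of "\<Inter> {P. Sigma0 Sig A \<subseteq> P \<and> trans P \<and> pclos A P \<subseteq> P}"]
    by blast
qed
lemma prov_least: "Sigma0 Sig A \<subseteq> P \<Longrightarrow> trans P \<Longrightarrow> pclos A P \<subseteq> P \<Longrightarrow> provable Sig A \<subseteq> P"
  unfolding provable_def by blast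

lemma pclos_mono: "P \<subseteq> Q \<Longrightarrow> pclos A P \<subseteq> pclos A Q"
  unfolding pclos_def by blast
lemma pclos_Omega: "pclos A P \<subseteq> Omega A \<times> Omega A"
  unfolding pclos_def by blast

lemma prov_transD: "(a, b) \<in> provable Sig A \<Longrightarrow> (b, c) \<in> provable Sig A \<Longrightarrow> (a, c) \<in> provable Sig A"
  using prov_trans by (metis transD)

lemma prov_closeI:
  assumes "a \<in> Omega A" "b \<in> Omega A"
    and "\<And>F. finite F \<Longrightarrow> F \<subseteq> tests A \<Longrightarrow> \<exists>a' b'. (a', b') \<in> provable Sig A \<and> agree F a a' \<and> agree F b b'"
  shows "(a, b) \<in> provable Sig A"
proof -
  have "(a, b) \<in> pclos A (provable Sig A)" unfolding pclos_def using assms by fastforce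
  thus ?thesis using prov_pclos by blast
qed

lemma cont_hom_one: "cont_hom C A (\<lambda>z. oone A)"
  unfolding cont_hom_def by (auto simp: oone_Omega agree_def omul_one_l)

locale sigwf =
  fixes Sig :: "(nat set \<times> pw \<times> pw) set"
  assumes wf: "\<forall>(B, u, v)\<in>Sig. finite B \<and> u \<in> Omega B \<and> v \<in> Omega B"
begin

lemma Sigma0I:
  assumes "(B, u, v) \<in> Sig \<or> (B, v, u) \<in> Sig" "cont_hom B A \<phi>" "mvars t \<subseteq> {..length ws}"
    "set ws \<subseteq> Omega A" "a = teval A (case_nat (\<phi> u) (\<lambda>i. ws ! i)) t"
    "b = teval A (case_nat (\<phi> v) (\<lambda>i. ws ! i)) t"
  shows "(a, b) \<in> Sigma0 Sig A"
  unfolding Sigma0_def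
  by (rule CollectI, rule exI[of _ B], rule exI[of _ u], rule exI[of _ v], rule exI[of _ \<phi>],
      rule exI[of _ t], rule exI[of _ ws]) (use assms in simp)

lemma Sigma0E:
  assumes "(a, b) \<in> Sigma0 Sig A"
  obtains B u v \<phi> t ws where "a = teval A (case_nat (\<phi> u) (\<lambda>i. ws ! i)) t"
    "b = teval A (case_nat (\<phi> v) (\<lambda>i. ws ! i)) t" "(B, u, v) \<in> Sig \<or> (B, v, u) \<in> Sig"
    "cont_hom B A \<phi>" "mvars t \<subseteq> {..length ws}" "set ws \<subseteq> Omega A"
  using assms unfolding Sigma0_def mem_Collect_eq
  apply -
  apply (elim exE conjE)
  apply (rule that)
  apply simp_all
  done

lemma Sigma0_Omega: "(a, b) \<in> Sigma0 Sig A \<Longrightarrow> a \<in> Omega A \<and> b \<in> Omega A"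
proof -
  assume "(a, b) \<in> Sigma0 Sig A"
  then obtain B u v \<phi> t ws where d: "a = teval A (case_nat (\<phi> u) (\<lambda>i. ws ! i)) t"
    "b = teval A (case_nat (\<phi> v) (\<lambda>i. ws ! i)) t" "(B, u, v) \<in> Sig \<or> (B, v, u) \<in> Sig"
    "cont_hom B A \<phi>" "mvars t \<subseteq> {..length ws}" "set ws \<subseteq> Omega A"
    by (rule Sigma0E)
  have uv: "u \<in> Omega B" "v \<in> Omega B" using d(3) wf by auto
  have "\<phi> u \<in> Omega A" "\<phi> v \<in> Omega A" using ch_Omega[OF d(4)] uv by auto
  hence "\<forall>i\<in>mvars t. case_nat (\<phi> u) (\<lambda>i. ws ! i) i \<in> Omega A \<and> case_nat (\<phi> v) (\<lambda>i. ws ! i) i \<in> Omega A"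
    using d(5,6) by (auto split: nat.split simp: subset_iff)
  thus ?thesis using d(1,2) teval_Omega by (metis (no_types, lifting))
qed

lemma Sigma0_sym: "(a, b) \<in> Sigma0 Sig A \<Longrightarrow> (b, a) \<in> Sigma0 Sig A"
proof -
  assume "(a, b) \<in> Sigma0 Sig A"
  then obtain B u v \<phi> t ws where D: "a = teval A (case_nat (\<phi> u) (\<lambda>i. ws ! i)) t"
    "b = teval A (case_nat (\<phi> v) (\<lambda>i. ws ! i)) t" "(B, u, v) \<in> Sig \<or> (B, v, u) \<in> Sig"
    "cont_hom B A \<phi>" "mvars t \<subseteq> {..length ws}" "set ws \<subseteq> Omega A"
    by (rule Sigma0E)
  have d3: "(B, v, u) \<in> Sig \<or> (B, u, v) \<in> Sig" using D(3) by blast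
  show ?thesis unfolding Sigma0_def mem_Collect_eq by (rule exI[of _ B], rule exI[of _ v], rule exI[of _ u], rule exI[of _ \<phi>], rule exI[of _ "t"], rule exI[of _ "ws"]) (use D d3 in simp)
qed

lemma Sigma0_refl:
  assumes ne: "Sig \<noteq> {}" and w: "w \<in> Omega A"
  shows "(w, w) \<in> Sigma0 Sig A"
proof -
  obtain B u v where s: "(B, u, v) \<in> Sig" using ne by auto
  have e: "w = teval A (case_nat (oone A) (\<lambda>i. [w] ! i)) (MVar 1)" by simp
  show ?thesis
    unfolding Sigma0_def mem_Collect_eq by (rule exI[of _ B], rule exI[of _ u], rule exI[of _ v], rule exI[of _ "\<lambda>z. oone A"], rule exI[of _ "MVar 1"], rule exI[of _ "[w]"]) (use s w cont_hom_one in simp)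
qed

lemma Sigma0_inst:
  assumes s: "(B, u, v) \<in> Sig" and \<phi>: "cont_hom B A \<phi>"
  shows "(\<phi> u, \<phi> v) \<in> Sigma0 Sig A"
  unfolding Sigma0_def mem_Collect_eq by (rule exI[of _ B], rule exI[of _ u], rule exI[of _ v], rule exI[of _ \<phi>], rule exI[of _ "MVar 0"], rule exI[of _ "[]"]) (use s \<phi> in simp)

lemma Sigma0_ctx:
  assumes ab: "(a, b) \<in> Sigma0 Sig A" and c: "c \<in> Omega A" and d: "d \<in> Omega A"
  shows "(omul A (omul A c a) d, omul A (omul A c b) d) \<in> Sigma0 Sig A"
proof -
  obtain B u v \<phi> t ws where D: "a = teval A (case_nat (\<phi> u) (\<lambda>i. ws ! i)) t"
    "b = teval A (case_nat (\<phi> v) (\<lambda>i. ws ! i)) t" "(B, u, v) \<in> Sig \<or> (B, v, u) \<in> Sig"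
    "cont_hom B A \<phi>" "mvars t \<subseteq> {..length ws}" "set ws \<subseteq> Omega A"
    using ab by (rule Sigma0E)
  let ?m = "length ws"
  let ?ws = "ws @ [c, d]"
  let ?t = "MMul (MMul (MVar (Suc ?m)) t) (MVar (Suc (Suc ?m)))"
  have e: "teval A (case_nat x (\<lambda>i. ?ws ! i)) t = teval A (case_nat x (\<lambda>i. ws ! i)) t" for x
    using D(5) by (intro teval_cong) (auto split: nat.split simp: nth_append)
  have f1: "omul A (omul A c a) d = teval A (case_nat (\<phi> u) (\<lambda>i. ?ws ! i)) ?t"
    using e D(1) by (simp add: nth_append)
  have f2: "omul A (omul A c b) d = teval A (case_nat (\<phi> v) (\<lambda>i. ?ws ! i)) ?t"
    using e D(2) by (simp add: nth_append)
  have f3: "mvars ?t \<subseteq> {..length ?ws}" using D(5) by auto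
  have f4: "set ?ws \<subseteq> Omega A" using D(6) c d by auto
  show ?thesis unfolding Sigma0_def mem_Collect_eq by (rule exI[of _ B], rule exI[of _ u], rule exI[of _ v], rule exI[of _ \<phi>], rule exI[of _ "?t"], rule exI[of _ "?ws"]) (use D f1 f2 f3 f4 in simp)
qed

abbreviation "R A \<equiv> provable Sig A"

lemma R_Omega: "(a, b) \<in> R A \<Longrightarrow> a \<in> Omega A \<and> b \<in> Omega A"
proof -
  have "R A \<subseteq> R A \<inter> (Omega A \<times> Omega A)"
  proof (rule prov_least)
    show "Sigma0 Sig A \<subseteq> R A \<inter> Omega A \<times> Omega A" using prov_Sigma0 Sigma0_Omega by auto
    show "trans (R A \<inter> Omega A \<times> Omega A)" using prov_trans unfolding trans_def by blast
    show "pclos A (R A \<inter> Omega A \<times> Omega A) \<subseteq> R A \<inter> Omega A \<times> Omega A"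
      using prov_pclos pclos_mono[of "R A \<inter> Omega A \<times> Omega A" "R A" A] pclos_Omega[of A] by blast
  qed
  thus "(a, b) \<in> R A \<Longrightarrow> a \<in> Omega A \<and> b \<in> Omega A" by blast
qed

lemma R_sym: "(a, b) \<in> R A \<Longrightarrow> (b, a) \<in> R A"
proof -
  have "R A \<subseteq> {(a, b). (b, a) \<in> R A}"
  proof (rule prov_least)
    show "Sigma0 Sig A \<subseteq> {(a, b). (b, a) \<in> R A}" using prov_Sigma0 Sigma0_sym by blast
    show "trans {(a, b). (b, a) \<in> R A}" using prov_trans unfolding trans_def by blast
    show "pclos A {(a, b). (b, a) \<in> R A} \<subseteq> {(a, b). (b, a) \<in> R A}"
    proof (clarify)
      fix a b assume p: "(a, b) \<in> pclos A {(a, b). (b, a) \<in> R A}"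
      show "(b, a) \<in> R A"
      proof (rule prov_closeI)
        show "b \<in> Omega A" "a \<in> Omega A" using p pclos_Omega by blast+
        fix F assume F: "finite F" "F \<subseteq> tests A"
        then obtain a' b' where "(b', a') \<in> R A" "agree F a a'" "agree F b b'"
          using p unfolding pclos_def by blast
        thus "\<exists>a'' b''. (a'', b'') \<in> R A \<and> agree F b a'' \<and> agree F a b''" by blast
      qed
    qed
  qed
  thus "(a, b) \<in> R A \<Longrightarrow> (b, a) \<in> R A" by blast
qed

lemma R_ctx:
  assumes ab: "(a, b) \<in> R A" and c: "c \<in> Omega A" and d: "d \<in> Omega A"
  shows "(omul A (omul A c a) d, omul A (omul A c b) d) \<in> R A"
proof -
  let ?Q = "{(a, b). \<forall>c\<in>Omega A. \<forall>d\<in>Omega A. (omul A (omul A c a) d, omul A (omul A c b) d) \<in> R A}"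
  have "R A \<subseteq> ?Q"
  proof (rule prov_least)
    show "Sigma0 Sig A \<subseteq> ?Q" using prov_Sigma0 Sigma0_ctx by blast
    show "trans ?Q" using prov_trans unfolding trans_def by blast
    show "pclos A ?Q \<subseteq> ?Q"
    proof (clarify)
      fix a b c d assume p: "(a, b) \<in> pclos A ?Q" and c: "c \<in> Omega A" and d: "d \<in> Omega A"
      have ab: "a \<in> Omega A" "b \<in> Omega A" using p unfolding pclos_def by auto
      show "(omul A (omul A c a) d, omul A (omul A c b) d) \<in> R A"
      proof (rule prov_closeI)
        show "omul A (omul A c a) d \<in> Omega A" "omul A (omul A c b) d \<in> Omega A"
          using ab c d by (auto intro: omul_Omega)
      next
        fix F assume F: "finite F" "F \<subseteq> tests A"
        then obtain a' b' where q: "(a', b') \<in> ?Q" "agree F a a'" "agree F b b'"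
          using p unfolding pclos_def by blast
        have "(omul A (omul A c a') d, omul A (omul A c b') d) \<in> R A" using q(1) c d by blast
        moreover have "agree F (omul A (omul A c a) d) (omul A (omul A c a') d)"
          using q(2) F by (intro agree_omul agree_refl)
        moreover have "agree F (omul A (omul A c b) d) (omul A (omul A c b') d)"
          using q(3) F by (intro agree_omul agree_refl)
        ultimately show "\<exists>a'' b''. (a'', b'') \<in> R A \<and> agree F (omul A (omul A c a) d) a''
               \<and> agree F (omul A (omul A c b) d) b''" by blast
      qed
    qed
  qed
  thus ?thesis using ab c d by blast
qed

lemma R_mul_l: "(a, b) \<in> R A \<Longrightarrow> c \<in> Omega A \<Longrightarrow> (omul A c a, omul A c b) \<in> R A"
  using R_ctx[of a b A c "oone A"] R_Omega[of a b A] by (simp add: oone_Omega omul_one_r omul_Omega)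
lemma R_mul_r: "(a, b) \<in> R A \<Longrightarrow> c \<in> Omega A \<Longrightarrow> (omul A a c, omul A b c) \<in> R A"
  using R_ctx[of a b A "oone A" c] R_Omega[of a b A] by (simp add: oone_Omega omul_one_l omul_Omega)

lemma R_mul: "(a, b) \<in> R A \<Longrightarrow> (c, d) \<in> R A \<Longrightarrow> (omul A a c, omul A b d) \<in> R A"
  using R_mul_l R_mul_r R_Omega prov_transD by metis

lemma R_refl: "Sig \<noteq> {} \<Longrightarrow> w \<in> Omega A \<Longrightarrow> (w, w) \<in> R A"
  using Sigma0_refl prov_Sigma0 by blast

lemma R_pow: "(a, b) \<in> R A \<Longrightarrow> Sig \<noteq> {} \<Longrightarrow> (opow A a k, opow A b k) \<in> R A"
  by (induction k) (auto intro: R_refl oone_Omega R_mul)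

end

definition bigN :: "(nat monoid \<times> (nat \<Rightarrow> nat)) set \<Rightarrow> nat" where
  "bigN F = fact (\<Sum>g\<in>F. card (carrier (fst g)))"

lemma bigN_pos: "bigN F > 0" by (simp add: bigN_def)

lemma bigN_dvd: "finite F \<Longrightarrow> (T, f) \<in> F \<Longrightarrow> fact (card (carrier T)) dvd bigN F"
proof -
  assume F: "finite F" and g: "(T, f) \<in> F"
  have "card (carrier (fst (T, f))) \<le> (\<Sum>g\<in>F. card (carrier (fst g)))"
    by (rule member_le_sum[OF g _ F]) auto
  thus ?thesis unfolding bigN_def by (simp add: fact_dvd)
qed

lemma opow_om_agree:
  assumes a: "a \<in> Omega A" and F: "finite F" "F \<subseteq> tests A"
  shows "agree F (opow A a (bigN F)) (oom A a)"
  unfolding agree_def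
proof (clarify)
  fix T f assume g: "(T, f) \<in> F"
  have t: "(T, f) \<in> tests A" using g F by auto
  hence m: "monoid T" "finite (carrier T)" by (auto simp: tests_def)
  show "opow A a (bigN F) T f = oom A a T f"
    using t monoid.pow_dvd_fact[OF m Omega_carrier[OF a t] bigN_dvd[OF F(1) g] bigN_pos]
    by (simp add: opow_test om_def)
qed

lemma opow_omm_agree:
  assumes a: "a \<in> Omega A" and F: "finite F" "F \<subseteq> tests A"
  shows "agree F (opow A a (2 * bigN F - 1)) (oomm A a)"
  unfolding agree_def
proof (clarify)
  fix T f assume g: "(T, f) \<in> F"
  have t: "(T, f) \<in> tests A" using g F by auto
  hence m: "monoid T" "finite (carrier T)" by (auto simp: tests_def)
  have x: "a T f \<in> carrier T" using Omega_carrier[OF a t] .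
  let ?N = "fact (card (carrier T)) :: nat"
  have eq: "a T f [^]\<^bsub>T\<^esub> bigN F = a T f [^]\<^bsub>T\<^esub> ?N"
    using monoid.pow_dvd_fact[OF m x bigN_dvd[OF F(1) g] bigN_pos] .
  have iN: "a T f [^]\<^bsub>T\<^esub> ?N \<otimes>\<^bsub>T\<^esub> a T f [^]\<^bsub>T\<^esub> ?N = a T f [^]\<^bsub>T\<^esub> ?N"
    using monoid.pow_fact_idem[OF m x] .
  have "a T f [^]\<^bsub>T\<^esub> (2 * bigN F - 1) = a T f [^]\<^bsub>T\<^esub> (2 * ?N - 1)"
    using monoid.omm_unique[OF m(1) x _ fact_ge1 _ iN, of "bigN F"] eq iN bigN_pos
    by (metis One_nat_def Suc_leI)
  thus "opow A a (2 * bigN F - 1) T f = oomm A a T f"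
    using t by (simp add: opow_test omm_def)
qed

context sigwf begin

lemma R_oom: assumes ab: "(a, b) \<in> R A" and ne: "Sig \<noteq> {}" shows "(oom A a, oom A b) \<in> R A"
proof (rule prov_closeI)
  have o: "a \<in> Omega A" "b \<in> Omega A" using R_Omega[OF ab] by auto
  thus "oom A a \<in> Omega A" "oom A b \<in> Omega A" by (auto intro: oom_Omega)
  fix F assume F: "finite F" "F \<subseteq> tests A"
  show "\<exists>a' b'. (a', b') \<in> R A \<and> agree F (oom A a) a' \<and> agree F (oom A b) b'"
    using R_pow[OF ab ne, of "bigN F"] opow_om_agree[OF o(1) F] opow_om_agree[OF o(2) F]
    unfolding agree_def by fastforce
qed

lemma R_oomm: assumes ab: "(a, b) \<in> R A" and ne: "Sig \<noteq> {}" shows "(oomm A a, oomm A b) \<in> R A"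
proof (rule prov_closeI)
  have o: "a \<in> Omega A" "b \<in> Omega A" using R_Omega[OF ab] by auto
  thus "oomm A a \<in> Omega A" "oomm A b \<in> Omega A" by (auto intro: oomm_Omega)
  fix F assume F: "finite F" "F \<subseteq> tests A"
  show "\<exists>a' b'. (a', b') \<in> R A \<and> agree F (oomm A a) a' \<and> agree F (oomm A b) b'"
    using R_pow[OF ab ne, of "2 * bigN F - 1"] opow_omm_agree[OF o(1) F] opow_omm_agree[OF o(2) F]
    unfolding agree_def by fastforce
qed

end



definition U1 :: "nat monoid" where "U1 = \<lparr>carrier = {0, 1}, mult = (*), one = 1\<rparr>"

lemma U1_monoid: "monoid U1"
  by (rule monoidI) (auto simp: U1_def)
lemma U1_finite: "finite (carrier U1)" by (simp add: U1_def)
lemma U1_not_group: "\<not> group U1"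
proof
  assume "group U1"
  hence "0 \<in> Units U1" using group.Units by (fastforce simp: U1_def)
  thus False by (auto simp: Units_def U1_def)
qed

definition cyc :: "nat monoid \<Rightarrow> nat \<Rightarrow> nat monoid" where
  "cyc T a = T\<lparr>carrier := {a [^]\<^bsub>T\<^esub> (k::nat) | k. True}\<rparr>"

lemma cyc_monoid: assumes T: "monoid T" and a: "a \<in> carrier T" shows "monoid (cyc T a)"
proof (rule monoidI)
  fix x y assume "x \<in> carrier (cyc T a)" "y \<in> carrier (cyc T a)"
  then obtain i j where "x = a [^]\<^bsub>T\<^esub> (i::nat)" "y = a [^]\<^bsub>T\<^esub> (j::nat)" by (auto simp: cyc_def)
  thus "x \<otimes>\<^bsub>cyc T a\<^esub> y \<in> carrier (cyc T a)"
    using monoid.nat_pow_mult[OF T a] by (auto simp: cyc_def)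
next
  show "\<one>\<^bsub>cyc T a\<^esub> \<in> carrier (cyc T a)" by (auto simp: cyc_def intro: exI[of _ 0])
next
  fix x y z assume "x \<in> carrier (cyc T a)" "y \<in> carrier (cyc T a)" "z \<in> carrier (cyc T a)"
  thus "x \<otimes>\<^bsub>cyc T a\<^esub> y \<otimes>\<^bsub>cyc T a\<^esub> z = x \<otimes>\<^bsub>cyc T a\<^esub> (y \<otimes>\<^bsub>cyc T a\<^esub> z)"
    using T a by (auto simp: cyc_def monoid.m_assoc monoid.nat_pow_closed)
next
  fix x assume "x \<in> carrier (cyc T a)"
  thus "\<one>\<^bsub>cyc T a\<^esub> \<otimes>\<^bsub>cyc T a\<^esub> x = x" using T a by (auto simp: cyc_def monoid.nat_pow_closed)
next
  fix x assume "x \<in> carrier (cyc T a)"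
  thus "x \<otimes>\<^bsub>cyc T a\<^esub> \<one>\<^bsub>cyc T a\<^esub> = x" using T a by (auto simp: cyc_def monoid.nat_pow_closed)
qed

lemma cyc_sub: "monoid T \<Longrightarrow> a \<in> carrier T \<Longrightarrow> carrier (cyc T a) \<subseteq> carrier T"
  by (auto simp: cyc_def monoid.nat_pow_closed)

lemma cyc_finite: "monoid T \<Longrightarrow> finite (carrier T) \<Longrightarrow> a \<in> carrier T \<Longrightarrow> finite (carrier (cyc T a))"
  using cyc_sub finite_subset by blast

lemma cyc_incl: "monoid T \<Longrightarrow> a \<in> carrier T \<Longrightarrow> mhom id (cyc T a) T"
  unfolding mhom_def by (auto simp: cyc_def monoid.nat_pow_closed)

lemma key_power:
  assumes T: "monoid T" "finite (carrier T)" and a: "a \<in> carrier T"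
    and d: "fact (card (carrier T)) dvd (L::nat)" and L: "L > 0"
    and cases: "j \<ge> 1 \<or> (\<exists>k\<ge>1. a [^]\<^bsub>T\<^esub> (k::nat) = \<one>\<^bsub>T\<^esub>)"
  shows "(a [^]\<^bsub>T\<^esub> (j::nat)) [^]\<^bsub>T\<^esub> L = om T a"
proof (cases "j \<ge> 1")
  case True
  have "(a [^]\<^bsub>T\<^esub> j) [^]\<^bsub>T\<^esub> L = a [^]\<^bsub>T\<^esub> (j * L)" using monoid.nat_pow_pow[OF T(1) a] by simp
  also have "\<dots> = om T a" unfolding om_def
    using monoid.pow_dvd_fact[OF T a, of "j * L"] d L True by (simp add: dvd_mult)
  finally show ?thesis .
next
  case False
  hence j: "j = 0" by simp
  obtain k :: nat where k: "k \<ge> 1" "a [^]\<^bsub>T\<^esub> k = \<one>\<^bsub>T\<^esub>" using cases False by blast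
  have ek: "a [^]\<^bsub>T\<^esub> k \<otimes>\<^bsub>T\<^esub> a [^]\<^bsub>T\<^esub> k = a [^]\<^bsub>T\<^esub> k" using k T(1) by (simp add: monoid.l_one monoid.one_closed)
  have "om T a = a [^]\<^bsub>T\<^esub> k" unfolding om_def
    using monoid.idem_pow_unique[OF T(1) a fact_ge1 k(1) monoid.pow_fact_idem[OF T a] ek] .
  thus ?thesis using j k T(1) by (simp add: monoid.nat_pow_one)
qed

context sigwf begin

lemma U1_witness:
  assumes grp: "\<forall>T\<in>models Sig. group T"
  obtains C p q g where "(C, p, q) \<in> Sig \<or> (C, q, p) \<in> Sig" "(U1, g) \<in> tests C"
    "p U1 g = 0" "q U1 g = 1" "p \<in> Omega C" "q \<in> Omega C"
proof -
  have "U1 \<notin> models Sig" using grp U1_not_group by blast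
  then obtain C u v where s: "(C, u, v) \<in> Sig" and np: "\<not> psat U1 (C, u, v)"
    unfolding models_def using U1_monoid U1_finite by auto
  have uv: "u \<in> Omega C" "v \<in> Omega C" using s wf by auto
  obtain \<psi> where \<psi>: "cont_hom_fin C U1 \<psi>" "\<psi> u \<noteq> \<psi> v" using np unfolding psat_def by auto
  define g where "g c = (if c \<in> C then \<psi> (gen C c) else 0)" for c
  have t: "(U1, g) \<in> tests C" using U1_monoid U1_finite chf_carrier[OF \<psi>(1) gen_Omega]
    by (auto simp: tests_def g_def)
  have ev: "\<psi> z = z U1 g" if "z \<in> Omega C" for z
    by (rule uniqueness[OF \<psi>(1) eval_chf[OF t] _ that]) (simp add: t g_def)
  have "u U1 g \<noteq> v U1 g" using ev uv \<psi>(2) by simp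
  moreover have "u U1 g \<in> {0, 1}" "v U1 g \<in> {0, 1}" using Omega_carrier[OF _ t] uv by (auto simp: U1_def)
  ultimately have "(u U1 g = 0 \<and> v U1 g = 1) \<or> (v U1 g = 0 \<and> u U1 g = 1)" by auto
  thus ?thesis
  proof
    assume "u U1 g = 0 \<and> v U1 g = 1" thus ?thesis using that[of C u v g] s t uv by blast
  next
    assume "v U1 g = 0 \<and> u U1 g = 1" thus ?thesis using that[of C v u g] s t uv by blast
  qed
qed

lemma Sig_ne: "\<forall>T\<in>models Sig. group T \<Longrightarrow> Sig \<noteq> {}"
  using U1_witness by blast

lemma stepA:
  assumes grp: "\<forall>T\<in>models Sig. group T" and y: "y \<in> Omega B"
  shows "(oom B y, oone B) \<in> R B"
proof -
  have ne: "Sig \<noteq> {}" using Sig_ne[OF grp] .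
  obtain C p q g where s: "(C, p, q) \<in> Sig \<or> (C, q, p) \<in> Sig" and tg: "(U1, g) \<in> tests C"
    and pq: "p U1 g = 0" "q U1 g = 1" "p \<in> Omega C" "q \<in> Omega C"
    using U1_witness[OF grp] by blast
  define w where "w c = (if g c = 0 then y else oone B)" for c
  have w: "\<forall>c\<in>C. w c \<in> Omega B" using y oone_Omega by (simp add: w_def)
  let ?\<phi> = "subst B w"
  have ch: "cont_hom C B ?\<phi>" using subst_cont_hom[OF w] .
  have "(?\<phi> p, ?\<phi> q) \<in> Sigma0 Sig B"
    using s Sigma0_inst[OF _ ch] Sigma0_sym by blast
  hence R0: "(?\<phi> p, ?\<phi> q) \<in> R B" using prov_Sigma0 by blast
  have gv: "g c \<in> {0, 1}" if "c \<in> C" for c using tg that by (auto simp: tests_def U1_def)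
  show ?thesis
  proof (rule prov_closeI)
    show "oom B y \<in> Omega B" "oone B \<in> Omega B" using oom_Omega[OF y] oone_Omega by auto
    fix F assume F: "finite F" "F \<subseteq> tests B"
    let ?L = "bigN F"
    have a1: "agree F (oom B y) (opow B (?\<phi> p) ?L) \<and> agree F (oone B) (opow B (?\<phi> q) ?L)"
      unfolding agree_def
    proof (intro conjI; clarify)
      fix T f assume gF: "(T, f) \<in> F"
      have t: "(T, f) \<in> tests B" using gF F by auto
      have Tm: "monoid T" "finite (carrier T)" using t by (auto simp: tests_def)
      let ?a = "y T f"
      have a: "?a \<in> carrier T" using Omega_carrier[OF y t] .
      let ?f' = "\<lambda>c. w c T f"
      let ?M = "cyc T ?a"
      have f'v: "?f' c = (if g c = 0 then ?a else \<one>\<^bsub>T\<^esub>)" for c using t by (simp add: w_def)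
      have Mm: "monoid ?M" "finite (carrier ?M)" using cyc_monoid[OF Tm(1) a] cyc_finite[OF Tm a] by auto
      have aM: "?a \<in> carrier ?M" "\<one>\<^bsub>T\<^esub> \<in> carrier ?M" unfolding cyc_def
        using Tm(1) a by (auto intro: exI[of _ 1] exI[of _ 0])
      have tM: "(?M, ?f') \<in> tests C" using Mm aM f'v by (auto simp: tests_def)
      have incl: "mhom id ?M T" by (rule cyc_incl[OF Tm(1) a])
      have nat_id: "z T ?f' = z ?M ?f'" if "z \<in> Omega C" for z
        using Omega_nat[OF that tM Tm incl] by simp
      have inM: "z ?M ?f' \<in> carrier ?M" if "z \<in> Omega C" for z using Omega_carrier[OF that tM] .
      have phiv: "?\<phi> z T f = z ?M ?f'" if "z \<in> Omega C" for z using t nat_id[OF that] by simp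
      have dv: "fact (card (carrier T)) dvd ?L" using bigN_dvd[OF F(1) gF] .
      have Lp: "?L > 0" by (rule bigN_pos)
      have res: "(?\<phi> p T f) [^]\<^bsub>T\<^esub> ?L = om T ?a \<and> (?\<phi> q T f) [^]\<^bsub>T\<^esub> ?L = \<one>\<^bsub>T\<^esub>"
      proof (cases "\<exists>k\<ge>1. ?a [^]\<^bsub>T\<^esub> (k::nat) = \<one>\<^bsub>T\<^esub>")
        case True
        obtain jp :: nat where jp: "p ?M ?f' = ?a [^]\<^bsub>T\<^esub> jp" using inM[OF pq(3)] by (auto simp: cyc_def)
        obtain jq :: nat where jq: "q ?M ?f' = ?a [^]\<^bsub>T\<^esub> jq" using inM[OF pq(4)] by (auto simp: cyc_def)
        have "om T ?a = \<one>\<^bsub>T\<^esub>" using key_power[OF Tm a dv Lp, of 0] True Tm(1) by (simp add: monoid.nat_pow_one)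
        thus ?thesis using key_power[OF Tm a dv Lp] True phiv pq jp jq by simp
      next
        case False
        hence nu: "\<And>k. k \<ge> 1 \<Longrightarrow> ?a [^]\<^bsub>T\<^esub> (k::nat) \<noteq> \<one>\<^bsub>T\<^esub>" by blast
        define \<chi> where "\<chi> x = (if x = \<one>\<^bsub>T\<^esub> then 1 else (0::nat))" for x
        have pw1: "?a [^]\<^bsub>T\<^esub> (i::nat) = \<one>\<^bsub>T\<^esub> \<longleftrightarrow> i = 0" for i using nu[of i] by (cases i) auto
        have hc: "mhom \<chi> ?M U1" unfolding mhom_def
        proof (intro conjI ballI)
          show "\<chi> \<in> carrier ?M \<rightarrow> carrier U1" by (auto simp: \<chi>_def U1_def)
        next
          fix x z assume "x \<in> carrier ?M" "z \<in> carrier ?M"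
          then obtain i j where ij: "x = ?a [^]\<^bsub>T\<^esub> (i::nat)" "z = ?a [^]\<^bsub>T\<^esub> (j::nat)" by (auto simp: cyc_def)
          have "x \<otimes>\<^bsub>?M\<^esub> z = ?a [^]\<^bsub>T\<^esub> (i + j)" using ij monoid.nat_pow_mult[OF Tm(1) a] by (simp add: cyc_def)
          thus "\<chi> (x \<otimes>\<^bsub>?M\<^esub> z) = \<chi> x \<otimes>\<^bsub>U1\<^esub> \<chi> z" using ij pw1 by (auto simp: \<chi>_def U1_def)
        next
          show "\<chi> \<one>\<^bsub>?M\<^esub> = \<one>\<^bsub>U1\<^esub>" by (simp add: \<chi>_def U1_def cyc_def)
        qed
        have ag: "\<forall>c\<in>C. (\<chi> \<circ> ?f') c = g c"
        proof
          fix c assume c: "c \<in> C"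
          have "?a \<noteq> \<one>\<^bsub>T\<^esub>" using nu[of 1] Tm(1) a by simp
          thus "(\<chi> \<circ> ?f') c = g c" using gv[OF c] f'v by (auto simp: \<chi>_def)
        qed
        have "\<chi> (p ?M ?f') = p U1 (\<chi> \<circ> ?f')" using Omega_nat[OF pq(3) tM U1_monoid U1_finite hc] by simp
        also have "\<dots> = p U1 g" using Omega_agree[OF pq(3) ag] .
        finally have cp: "\<chi> (p ?M ?f') = 0" using pq(1) by simp
        have "\<chi> (q ?M ?f') = q U1 (\<chi> \<circ> ?f')" using Omega_nat[OF pq(4) tM U1_monoid U1_finite hc] by simp
        also have "\<dots> = q U1 g" using Omega_agree[OF pq(4) ag] .
        finally have cq: "\<chi> (q ?M ?f') = 1" using pq(2) by simp
        obtain jp :: nat where jp: "p ?M ?f' = ?a [^]\<^bsub>T\<^esub> jp" using inM[OF pq(3)] by (auto simp: cyc_def)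
        have jp1: "jp \<ge> 1" using cp jp pw1[of jp] by (auto simp: \<chi>_def)
        have q1: "q ?M ?f' = \<one>\<^bsub>T\<^esub>" using cq by (auto simp: \<chi>_def split: if_splits)
        show ?thesis using key_power[OF Tm a dv Lp, of jp] jp1 phiv pq jp q1 Tm(1)
          by (simp add: monoid.nat_pow_one)
      qed
      show "oom B y T f = opow B (?\<phi> p) ?L T f" using res t by (simp add: opow_test)
      show "oone B T f = opow B (?\<phi> q) ?L T f" using res t by (simp add: opow_test)
    qed
    thus "\<exists>a' b'. (a', b') \<in> R B \<and> agree F (oom B y) a' \<and> agree F (oone B) b'"
      using R_pow[OF R0 ne, of ?L] by blast
  qed
qed

end


context monoid begin

lemma pow_right_absorb:
  assumes z: "z \<in> carrier G" and e: "e \<in> carrier G" and ze: "z \<otimes> e = z" and k: "k \<ge> 1"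
  shows "z [^] (k::nat) \<otimes> e = z [^] k"
  using k
proof (induction k)
  case 0 thus ?case by simp
next
  case (Suc k) thus ?case using z e ze by (simp add: m_assoc)
qed

lemma pow_left_absorb:
  assumes z: "z \<in> carrier G" and e: "e \<in> carrier G" and ez: "e \<otimes> z = z" and k: "k \<ge> 1"
  shows "e \<otimes> z [^] (k::nat) = z [^] k"
  using k
proof (induction k)
  case 0 thus ?case by simp
next
  case (Suc k)
  show ?case
  proof (cases "k = 0")
    case True thus ?thesis using z e ez by simp
  next
    case False
    hence "e \<otimes> z [^] k = z [^] k" using Suc by simp
    thus ?thesis using z e by (simp add: m_assoc[symmetric])
  qed
qed

lemma stability:
  assumes fin: "finite (carrier G)" and e: "e \<in> carrier G" and f: "f \<in> carrier G"
    and ef: "e \<otimes> f = f" and fe: "f \<otimes> e = f" and ff: "f \<otimes> f = f"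
    and a: "a \<in> carrier G" and b: "b \<in> carrier G" and eq: "e = a \<otimes> f \<otimes> b"
  shows "e = f"
proof -
  let ?N = "fact (card (carrier G)) :: nat"
  have fb: "f \<otimes> b \<in> carrier G" using f b by simp
  have "e = a \<otimes> (e \<otimes> f) \<otimes> b" using eq ef by simp
  also have "\<dots> = a \<otimes> e \<otimes> (f \<otimes> b)" using a e f b by (simp add: m_assoc)
  finally have step: "e = a \<otimes> e \<otimes> (f \<otimes> b)" .
  have ind: "e = a [^] n \<otimes> e \<otimes> (f \<otimes> b) [^] (n::nat)" for n
  proof (induction n)
    case 0 thus ?case using e by simp
  next
    case (Suc n)
    have "e = a [^] n \<otimes> (a \<otimes> e \<otimes> (f \<otimes> b)) \<otimes> (f \<otimes> b) [^] n" using Suc step by simp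
    also have "\<dots> = a [^] Suc n \<otimes> e \<otimes> (f \<otimes> b) [^] Suc n"
    proof -
      have p1: "a [^] Suc n = a [^] n \<otimes> a" by simp
      have p2: "(f \<otimes> b) [^] Suc n = (f \<otimes> b) \<otimes> (f \<otimes> b) [^] n" by (rule nat_pow_Suc2[OF fb])
      show ?thesis unfolding p1 p2 using a e fb by (simp add: m_assoc)
    qed
    finally show ?case .
  qed
  have i1: "a [^] ?N \<otimes> a [^] ?N = a [^] ?N" by (rule pow_fact_idem[OF fin a])
  have i2: "(f \<otimes> b) [^] ?N \<otimes> (f \<otimes> b) [^] ?N = (f \<otimes> b) [^] ?N" by (rule pow_fact_idem[OF fin fb])
  have eN: "e = a [^] ?N \<otimes> e \<otimes> (f \<otimes> b) [^] ?N" by (rule ind)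
  let ?X = "(f \<otimes> b) [^] ?N"
  have "e \<otimes> ?X = (a [^] ?N \<otimes> e \<otimes> ?X) \<otimes> ?X" by (rule arg_cong[where f="\<lambda>t. t \<otimes> ?X", OF eN])
  also have "\<dots> = a [^] ?N \<otimes> e \<otimes> (?X \<otimes> ?X)" using a e fb by (simp add: m_assoc)
  also have "\<dots> = a [^] ?N \<otimes> e \<otimes> ?X" using i2 by simp
  also have "\<dots> = e" by (rule eN[symmetric])
  finally have e2: "e \<otimes> (f \<otimes> b) [^] ?N = e" .
  have "?N > 0" by simp
  then obtain M where M: "?N = Suc M" using gr0_implies_Suc by blast
  let ?z = "b \<otimes> (f \<otimes> b) [^] M"
  have z: "?z \<in> carrier G" using b fb by simp
  have p: "(f \<otimes> b) [^] ?N = (f \<otimes> b) \<otimes> (f \<otimes> b) [^] M" unfolding M by (rule nat_pow_Suc2[OF fb])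
  have "e = e \<otimes> ((f \<otimes> b) \<otimes> (f \<otimes> b) [^] M)" using e2 unfolding p by simp
  also have "\<dots> = e \<otimes> (f \<otimes> ?z)" using f b fb by (simp add: m_assoc)
  finally have "e = e \<otimes> (f \<otimes> ?z)" .
  also have "\<dots> = f \<otimes> ?z" using ef e f z by (simp add: m_assoc[symmetric])
  finally have ez: "e = f \<otimes> ?z" .
  hence "f \<otimes> e = e" using ff f z by (simp add: m_assoc[symmetric])
  thus ?thesis using fe by simp
qed

lemma decseq_stable:
  fixes c :: "nat \<Rightarrow> nat"
  assumes "\<And>n. c (Suc n) \<le> c n"
  shows "\<exists>N. \<forall>n\<ge>N. c n = c N"
proof -
  obtain N where N: "\<forall>y. c N \<le> c y" using ex_has_least_nat[of "\<lambda>_. True" 0 c] by blast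
  have mono: "c n \<le> c m" if "m \<le> n" for m n
    using that by (induction n) (auto simp: le_Suc_eq intro: order.trans[OF assms])
  show ?thesis using N mono by (intro exI[of _ N]) (auto intro: antisym)
qed

lemma seq_stabilizes:
  fixes s x :: "nat \<Rightarrow> 'a"
  assumes fin: "finite (carrier G)" and s0: "s 0 \<in> carrier G" "s 0 \<otimes> s 0 = s 0"
    and x: "\<And>n. x n \<in> carrier G"
    and sS: "\<And>n. s (Suc n) = (s n \<otimes> x n \<otimes> s n) [^] (fact (card (carrier G)) :: nat)"
  shows "\<exists>N. \<forall>n\<ge>N. s n = s N"
proof -
  let ?N = "fact (card (carrier G)) :: nat"
  have sc: "s n \<in> carrier G \<and> s n \<otimes> s n = s n" for n
  proof (induction n)
    case 0 thus ?case using s0 by simp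
  next
    case (Suc n)
    have "s n \<otimes> x n \<otimes> s n \<in> carrier G" using Suc x by simp
    thus ?case using sS pow_fact_idem[OF fin] by simp
  qed
  have ab: "s n \<otimes> s (Suc n) = s (Suc n) \<and> s (Suc n) \<otimes> s n = s (Suc n)" for n
  proof -
    let ?e = "s n" and ?z = "s n \<otimes> x n \<otimes> s n"
    have e: "?e \<in> carrier G" "?e \<otimes> ?e = ?e" using sc by auto
    have z: "?z \<in> carrier G" using e x by simp
    have "?z \<otimes> ?e = ?z" using e x by (simp add: m_assoc)
    moreover have "?e \<otimes> ?z = ?z" using e x by (simp add: m_assoc[symmetric])
    ultimately show ?thesis using pow_right_absorb[OF z e(1)] pow_left_absorb[OF z e(1)] sS fact_ge1 by simp
  qed
  define I where "I n = {a \<otimes> s n \<otimes> b | a b. a \<in> carrier G \<and> b \<in> carrier G}" for n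
  have Isub: "I n \<subseteq> carrier G" for n using sc by (auto simp: I_def)
  have Idec: "I (Suc n) \<subseteq> I n" for n
  proof
    fix y assume "y \<in> I (Suc n)"
    then obtain a b where y: "y = a \<otimes> s (Suc n) \<otimes> b" "a \<in> carrier G" "b \<in> carrier G" by (auto simp: I_def)
    hence "y = a \<otimes> s n \<otimes> (s (Suc n) \<otimes> b)" using ab[of n] sc by (metis m_assoc m_closed)
    thus "y \<in> I n" using y sc unfolding I_def by blast
  qed
  have "\<exists>N. \<forall>n\<ge>N. card (I n) = card (I N)"
    by (rule decseq_stable) (use Idec Isub fin in \<open>meson card_mono finite_subset\<close>)
  then obtain N where N: "\<forall>n\<ge>N. card (I n) = card (I N)" by blast
  have eqS: "s (Suc n) = s n" if n: "n \<ge> N" for n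
  proof -
    have c1: "card (I (Suc n)) = card (I N)" by (rule N[rule_format]) (use n in simp)
    have c2: "card (I n) = card (I N)" by (rule N[rule_format]) (use n in simp)
    have "card (I (Suc n)) = card (I n)" using c1 c2 by simp
    hence "I (Suc n) = I n" using Idec Isub fin by (meson card_subset_eq finite_subset)
    moreover have "s n \<in> I n" unfolding I_def using sc by (intro CollectI exI[of _ \<one>] exI[of _ \<one>]) simp
    ultimately obtain a b where "s n = a \<otimes> s (Suc n) \<otimes> b" "a \<in> carrier G" "b \<in> carrier G"
      unfolding I_def by blast
    thus ?thesis using stability[OF fin] sc ab by metis
  qed
  have "s n = s N" if "n \<ge> N" for n using that
  proof (induction n)
    case 0 thus ?case by simp
  next
    case (Suc n) thus ?case using eqS by (cases "Suc n = N") (auto simp: le_Suc_eq)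
  qed
  thus ?thesis by blast
qed

end

definition wl :: "nat \<Rightarrow> nat list" where "wl n = list_decode (fst (prod_decode n))"

fun seqE :: "nat set \<Rightarrow> nat \<Rightarrow> pw" where
  "seqE B 0 = oone B"
| "seqE B (Suc n) = oom B (omul B (omul B (seqE B n) (wv B (wl n))) (seqE B n))"

lemma seqE_Omega: "seqE B n \<in> Omega B"
  by (induction n) (auto intro!: oom_Omega omul_Omega oone_Omega wv_Omega)

lemma seqE_stab:
  assumes t: "(T, f) \<in> tests B"
  shows "\<exists>N. \<forall>n\<ge>N. seqE B n T f = seqE B N T f"
proof -
  have T: "monoid T" "finite (carrier T)" using t by (auto simp: tests_def)
  show ?thesis
  proof (rule monoid.seq_stabilizes[OF T(1) T(2), of "\<lambda>n. seqE B n T f" "\<lambda>n. wval T f B (wl n)"])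
    show "seqE B 0 T f \<in> carrier T" "seqE B 0 T f \<otimes>\<^bsub>T\<^esub> seqE B 0 T f = seqE B 0 T f"
      using t T by (auto simp: monoid.one_closed)
    show "\<And>n. wval T f B (wl n) \<in> carrier T" using wval_carrier[OF t] .
    show "\<And>n. seqE B (Suc n) T f = (seqE B n T f \<otimes>\<^bsub>T\<^esub> wval T f B (wl n) \<otimes>\<^bsub>T\<^esub> seqE B n T f) [^]\<^bsub>T\<^esub> (fact (card (carrier T)) :: nat)"
      using t by (simp add: om_def wv_test)
  qed
qed

definition stab :: "nat set \<Rightarrow> nat monoid \<Rightarrow> (nat \<Rightarrow> nat) \<Rightarrow> nat" where
  "stab B T f = (SOME N. \<forall>n\<ge>N. seqE B n T f = seqE B N T f)"

definition Ee :: "nat set \<Rightarrow> pw" where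
  "Ee B = (\<lambda>T f. if (T, f) \<in> tests B then seqE B (stab B T f) T f else undefined)"

lemma Ee_eq: assumes t: "(T, f) \<in> tests B" and n: "n \<ge> stab B T f"
  shows "seqE B n T f = Ee B T f"
proof -
  have "\<forall>n\<ge>stab B T f. seqE B n T f = seqE B (stab B T f) T f"
    unfolding stab_def by (rule someI_ex[OF seqE_stab[OF t]])
  hence e: "seqE B n T f = seqE B (stab B T f) T f" using n by blast
  have "Ee B T f = seqE B (stab B T f) T f" using t by (simp add: Ee_def)
  thus ?thesis using e by simp
qed

lemma Ee_Omega: "Ee B \<in> Omega B"
proof (rule OmegaI)
  fix T f assume t: "(T, f) \<in> tests B"
  thus "Ee B T f \<in> carrier T" using Omega_carrier[OF seqE_Omega t] by (simp add: Ee_def)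
next
  fix T f assume "(T, f) \<notin> tests B" thus "Ee B T f = undefined" by (simp add: Ee_def)
next
  fix T f g assume fg: "\<forall>a\<in>B. f a = g a" and t: "(T, f) \<in> tests B" "(T, g) \<in> tests B"
  let ?n = "max (stab B T f) (stab B T g)"
  have "Ee B T f = seqE B ?n T f" using Ee_eq[OF t(1)] by simp
  also have "\<dots> = seqE B ?n T g" using Omega_agree[OF seqE_Omega fg] .
  also have "\<dots> = Ee B T g" using Ee_eq[OF t(2)] by simp
  finally show "Ee B T f = Ee B T g" .
next
  fix T f T' h assume t: "(T, f) \<in> tests B" and m: "monoid T'" "finite (carrier T')" "mhom h T T'"
  have t': "(T', h \<circ> f) \<in> tests B" using mhom_tests[OF t m] .
  let ?n = "max (stab B T f) (stab B T' (h \<circ> f))"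
  have "Ee B T' (h \<circ> f) = seqE B ?n T' (h \<circ> f)" using Ee_eq[OF t'] by simp
  also have "\<dots> = h (seqE B ?n T f)" using Omega_nat[OF seqE_Omega t m] .
  also have "\<dots> = h (Ee B T f)" using Ee_eq[OF t] by simp
  finally show "Ee B T' (h \<circ> f) = h (Ee B T f)" .
qed

lemma Ee_test: assumes t: "(T, f) \<in> tests B" shows "\<exists>n. Ee B T f = seqE B (Suc n) T f"
proof -
  have "seqE B (Suc (stab B T f)) T f = Ee B T f" by (rule Ee_eq) (use t in auto)
  thus ?thesis by (intro exI[of _ "stab B T f"]) (rule sym)
qed

lemma Ee_idem: "omul B (Ee B) (Ee B) = Ee B"
proof (rule Omega_eqI[where A=B])
  show "omul B (Ee B) (Ee B) \<in> Omega B" "Ee B \<in> Omega B" using omul_Omega Ee_Omega by auto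
  fix T f assume t: "(T, f) \<in> tests B"
  obtain n where n: "Ee B T f = seqE B (Suc n) T f" using Ee_test[OF t] by blast
  have T: "monoid T" "finite (carrier T)" using t by (auto simp: tests_def)
  have c: "seqE B n T f \<otimes>\<^bsub>T\<^esub> wv B (wl n) T f \<otimes>\<^bsub>T\<^esub> seqE B n T f \<in> carrier T"
    using Omega_carrier[OF seqE_Omega t] Omega_carrier[OF wv_Omega t] T by (simp add: monoid.m_closed)
  show "omul B (Ee B) (Ee B) T f = Ee B T f"
    using n t monoid.pow_fact_idem[OF T c] by (simp add: om_def)
qed

definition gsub :: "nat monoid \<Rightarrow> (nat \<Rightarrow> nat) \<Rightarrow> nat set \<Rightarrow> nat monoid" where
  "gsub T f B = T\<lparr>carrier := {wval T f B l | l. True}\<rparr>"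

lemma in_gsub:
  assumes w: "w \<in> Omega B" and t: "(T, f) \<in> tests B"
  shows "\<exists>l. w T f = wval T f B l"
proof -
  have T: "monoid T" "finite (carrier T)" using t by (auto simp: tests_def)
  let ?G = "gsub T f B"
  have sub: "carrier ?G \<subseteq> carrier T" using wval_carrier[OF t] by (auto simp: gsub_def)
  have mG: "monoid ?G"
  proof (rule monoidI)
    fix x y assume "x \<in> carrier ?G" "y \<in> carrier ?G"
    then obtain l1 l2 where "x = wval T f B l1" "y = wval T f B l2" by (auto simp: gsub_def)
    thus "x \<otimes>\<^bsub>?G\<^esub> y \<in> carrier ?G" using wval_append[OF t, of l1 l2, symmetric] by (auto simp: gsub_def)
  next
    show "\<one>\<^bsub>?G\<^esub> \<in> carrier ?G" by (simp add: gsub_def) (rule exI[of _ "[]"], simp)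
  next
    fix x y z assume "x \<in> carrier ?G" "y \<in> carrier ?G" "z \<in> carrier ?G"
    thus "x \<otimes>\<^bsub>?G\<^esub> y \<otimes>\<^bsub>?G\<^esub> z = x \<otimes>\<^bsub>?G\<^esub> (y \<otimes>\<^bsub>?G\<^esub> z)" using sub T(1)
      by (auto simp: gsub_def monoid.m_assoc wval_carrier[OF t])
  next
    fix x assume "x \<in> carrier ?G"
    thus "\<one>\<^bsub>?G\<^esub> \<otimes>\<^bsub>?G\<^esub> x = x" using T(1) by (auto simp: gsub_def wval_carrier[OF t])
  next
    fix x assume "x \<in> carrier ?G"
    thus "x \<otimes>\<^bsub>?G\<^esub> \<one>\<^bsub>?G\<^esub> = x" using T(1) by (auto simp: gsub_def wval_carrier[OF t])
  qed
  have tG: "(?G, f) \<in> tests B" using mG T sub finite_subset wval_single[OF t, symmetric]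
    by (auto simp: tests_def gsub_def)
  have hid: "mhom id ?G T" unfolding mhom_def using sub by (auto simp: gsub_def)
  have "w T (id \<circ> f) = id (w ?G f)" using Omega_nat[OF w tG T hid] .
  moreover have "w ?G f \<in> carrier ?G" using Omega_carrier[OF w tG] .
  ultimately show ?thesis by (auto simp: gsub_def)
qed

lemma Ee_star:
  assumes w: "w \<in> Omega B"
  shows "oom B (omul B (omul B (Ee B) w) (Ee B)) = Ee B"
proof (rule Omega_eqI[where A=B])
  show "oom B (omul B (omul B (Ee B) w) (Ee B)) \<in> Omega B" "Ee B \<in> Omega B"
    using w Ee_Omega by (auto intro!: oom_Omega omul_Omega)
  fix T f assume t: "(T, f) \<in> tests B"
  obtain l where l: "w T f = wval T f B l" using in_gsub[OF w t] by blast
  let ?n = "prod_encode (list_encode l, stab B T f)"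
  have n: "?n \<ge> stab B T f" by (rule le_prod_encode_2)
  have wln: "wl ?n = l" by (simp add: wl_def)
  have "Ee B T f = seqE B (Suc ?n) T f" by (rule Ee_eq[OF t, symmetric]) (use n in simp)
  also have "\<dots> = om T (seqE B ?n T f \<otimes>\<^bsub>T\<^esub> wval T f B l \<otimes>\<^bsub>T\<^esub> seqE B ?n T f)"
    using t wln by (simp add: wv_test)
  also have "\<dots> = om T (Ee B T f \<otimes>\<^bsub>T\<^esub> w T f \<otimes>\<^bsub>T\<^esub> Ee B T f)" using Ee_eq[OF t n] l by simp
  finally show "oom B (omul B (omul B (Ee B) w) (Ee B)) T f = Ee B T f" using t by simp
qed

context sigwf begin

lemma Ee_R:
  assumes grp: "\<forall>T\<in>models Sig. group T"
  shows "(Ee B, oone B) \<in> R B"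
proof (rule prov_closeI)
  show "Ee B \<in> Omega B" "oone B \<in> Omega B" using Ee_Omega oone_Omega by auto
  fix F assume F: "finite F" "F \<subseteq> tests B"
  let ?m = "\<Sum>g\<in>F. stab B (fst g) (snd g)"
  have "agree F (Ee B) (seqE B (Suc ?m))" unfolding agree_def
  proof (clarify)
    fix T f assume g: "(T, f) \<in> F"
    have "stab B T f \<le> ?m" using member_le_sum[OF g _ F(1), of "\<lambda>g. stab B (fst g) (snd g)"] by simp
    thus "Ee B T f = seqE B (Suc ?m) T f" using Ee_eq[of T f B "Suc ?m"] g F by auto
  qed
  moreover have "(seqE B (Suc ?m), oone B) \<in> R B"
    using stepA[OF grp] seqE_Omega wv_Omega by (simp add: omul_Omega)
  ultimately show "\<exists>a' b'. (a', b') \<in> R B \<and> agree F (Ee B) a' \<and> agree F (oone B) b'"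
    using agree_refl by blast
qed

end



lemma (in monoid) inv_facts:
  assumes fin: "finite (carrier G)" and z: "z \<in> carrier G" and e: "e \<in> carrier G"
    and ez: "e \<otimes> z = z" and zN: "z [^] (fact (card (carrier G)) :: nat) = e"
  shows "z [^] (2 * fact (card (carrier G)) - 1 :: nat) \<otimes> z = e"
    and "e \<otimes> z [^] (2 * fact (card (carrier G)) - 1 :: nat) = z [^] (2 * fact (card (carrier G)) - 1 :: nat)"
proof -
  let ?N = "fact (card (carrier G)) :: nat"
  have ee: "e \<otimes> e = e" using pow_fact_idem[OF fin z] zN by simp
  have eq: "Suc (2 * ?N - 1) = ?N + ?N" using fact_ge1[of "card (carrier G)"] by simp
  have "z [^] (2 * ?N - 1) \<otimes> z = z [^] (Suc (2 * ?N - 1))" by (rule nat_pow_Suc[symmetric])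
  also have "\<dots> = z [^] (?N + ?N)" by (simp only: eq)
  also have "\<dots> = e" using nat_pow_mult[OF z, of ?N ?N] zN ee by simp
  finally show "z [^] (2 * ?N - 1) \<otimes> z = e" .
  show "e \<otimes> z [^] (2 * ?N - 1) = z [^] (2 * ?N - 1)"
    by (rule pow_left_absorb[OF z e ez]) (use fact_ge1[of "card (carrier G)"] in arith)
qed

lemma oomm_one: "oomm A (oone A) = oone A"
  by (rule Omega_eqI[where A=A]) (auto intro!: oomm_Omega oone_Omega simp: omm_def tests_def monoid.nat_pow_one)

lemma mul_oomm: assumes x: "x \<in> Omega A" shows "omul A x (oomm A x) = oom A x"
proof (rule Omega_eqI[where A=A])
  show "omul A x (oomm A x) \<in> Omega A" "oom A x \<in> Omega A" using x by (auto intro!: omul_Omega oomm_Omega oom_Omega)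
  fix T f assume t: "(T, f) \<in> tests A"
  have T: "monoid T" "finite (carrier T)" using t by (auto simp: tests_def)
  have xc: "x T f \<in> carrier T" using Omega_carrier[OF x t] .
  let ?N = "fact (card (carrier T)) :: nat"
  have eq: "Suc (2 * ?N - 1) = ?N + ?N" using fact_ge1[of "card (carrier T)"] by simp
  have "x T f \<otimes>\<^bsub>T\<^esub> x T f [^]\<^bsub>T\<^esub> (2 * ?N - 1) = x T f [^]\<^bsub>T\<^esub> (Suc (2 * ?N - 1))"
    by (rule monoid.nat_pow_Suc2[OF T(1) xc, symmetric])
  also have "\<dots> = x T f [^]\<^bsub>T\<^esub> (?N + ?N)" by (simp only: eq)
  also have "x T f [^]\<^bsub>T\<^esub> (?N + ?N) = x T f [^]\<^bsub>T\<^esub> ?N"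
    using monoid.nat_pow_mult[OF T(1) xc, of ?N ?N] monoid.pow_fact_idem[OF T xc] by simp
  finally show "omul A x (oomm A x) T f = oom A x T f" using t by (simp add: omm_def om_def)
qed

locale mainctx = sigwf +
  fixes B :: "nat set"
  assumes grp: "\<forall>T\<in>models Sig. group T"
begin

abbreviation "E \<equiv> Ee B"
definition hat :: "pw \<Rightarrow> pw" where "hat x = omul B (omul B E x) E"
definition bar :: "pw \<Rightarrow> pw" where "bar x = oomm B (hat x)"
definition NN :: "pw set" where "NN = {n \<in> Omega B. (n, oone B) \<in> R B}"

lemma ne: "Sig \<noteq> {}" using Sig_ne[OF grp] .

lemma E_Om: "E \<in> Omega B" by (rule Ee_Omega)
lemma hat_Om: "x \<in> Omega B \<Longrightarrow> hat x \<in> Omega B" unfolding hat_def using E_Om by (auto intro!: omul_Omega)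
lemma bar_Om: "x \<in> Omega B \<Longrightarrow> bar x \<in> Omega B" unfolding bar_def using hat_Om by (auto intro!: oomm_Omega)

lemma E_idem_pt: assumes t: "(T, f) \<in> tests B" shows "E T f \<otimes>\<^bsub>T\<^esub> E T f = E T f"
proof -
  have "omul B E E T f = E T f" by (simp only: Ee_idem)
  thus ?thesis using t by simp
qed

lemma hat_pt: "(T, f) \<in> tests B \<Longrightarrow> hat x T f = E T f \<otimes>\<^bsub>T\<^esub> x T f \<otimes>\<^bsub>T\<^esub> E T f"
  by (simp add: hat_def)

lemma hat_om: assumes t: "(T, f) \<in> tests B" and x: "x \<in> Omega B" shows "om T (hat x T f) = E T f"
proof -
  have "oom B (hat x) T f = E T f" unfolding hat_def by (simp only: Ee_star[OF x])
  thus ?thesis using t by simp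
qed

lemma bar_pt: "(T, f) \<in> tests B \<Longrightarrow> bar x T f = omm T (hat x T f)"
  by (simp add: bar_def)

lemma pt_facts:
  assumes t: "(T, f) \<in> tests B" and x: "x \<in> Omega B"
  shows "bar x T f \<otimes>\<^bsub>T\<^esub> hat x T f = E T f" "E T f \<otimes>\<^bsub>T\<^esub> bar x T f = bar x T f"
    "bar x T f \<otimes>\<^bsub>T\<^esub> E T f = bar x T f"
proof -
  have T: "monoid T" "finite (carrier T)" using t by (auto simp: tests_def)
  have e: "E T f \<in> carrier T" using Omega_carrier[OF E_Om t] .
  have xc: "x T f \<in> carrier T" using Omega_carrier[OF x t] .
  let ?z = "hat x T f"
  have z: "?z \<in> carrier T" using Omega_carrier[OF hat_Om[OF x] t] .
  have ee: "E T f \<otimes>\<^bsub>T\<^esub> E T f = E T f" using E_idem_pt[OF t] .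
  have ee2: "\<And>y. y \<in> carrier T \<Longrightarrow> E T f \<otimes>\<^bsub>T\<^esub> (E T f \<otimes>\<^bsub>T\<^esub> y) = E T f \<otimes>\<^bsub>T\<^esub> y"
    using ee e T(1) by (simp add: monoid.m_assoc[symmetric])
  have ez: "E T f \<otimes>\<^bsub>T\<^esub> ?z = ?z" using hat_pt[OF t] e xc T(1) ee2 by (simp add: monoid.m_assoc monoid.m_closed)
  have ze: "?z \<otimes>\<^bsub>T\<^esub> E T f = ?z" using hat_pt[OF t] e xc T(1) ee by (simp add: monoid.m_assoc monoid.m_closed)
  have zN: "?z [^]\<^bsub>T\<^esub> (fact (card (carrier T)) :: nat) = E T f" using hat_om[OF t x] by (simp add: om_def)
  note I = monoid.inv_facts[OF T z e ez zN]
  show "bar x T f \<otimes>\<^bsub>T\<^esub> ?z = E T f" using I(1) by (simp add: bar_pt[OF t] omm_def)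
  show "E T f \<otimes>\<^bsub>T\<^esub> bar x T f = bar x T f" using I(2) by (simp add: bar_pt[OF t] omm_def)
  show "bar x T f \<otimes>\<^bsub>T\<^esub> E T f = bar x T f" unfolding bar_pt[OF t] omm_def
    by (rule monoid.pow_right_absorb[OF T(1) z e ze]) (use fact_ge1[of "card (carrier T)"] in arith)
qed

lemma hat_bar: assumes x: "x \<in> Omega B" shows "hat (bar x) = bar x"
proof (rule Omega_eqI[where A=B])
  show "hat (bar x) \<in> Omega B" "bar x \<in> Omega B" using hat_Om bar_Om x by auto
  fix T f assume t: "(T, f) \<in> tests B"
  show "hat (bar x) T f = bar x T f" using hat_pt[OF t] pt_facts[OF t x] by simp
qed

lemma E_R: "(E, oone B) \<in> R B" by (rule Ee_R[OF grp])

lemma Rr: "x \<in> Omega B \<Longrightarrow> (x, x) \<in> R B" using R_refl[OF ne] .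

lemma hat_R: assumes x: "x \<in> Omega B" shows "(hat x, x) \<in> R B"
proof -
  have "(hat x, omul B (omul B (oone B) x) (oone B)) \<in> R B"
    unfolding hat_def by (intro R_mul E_R Rr x)
  thus ?thesis using x by (simp add: omul_one_l omul_one_r)
qed

lemma hat_cong: "(x, y) \<in> R B \<Longrightarrow> (hat x, hat y) \<in> R B"
  unfolding hat_def by (intro R_mul Rr E_Om)

lemma bar_R: "x \<in> Omega B \<Longrightarrow> (bar x, oomm B x) \<in> R B"
  unfolding bar_def by (intro R_oomm hat_R ne)

lemma inv_rel:
  assumes xy: "(x, y) \<in> R B"
  shows "(omul B (omul B x E) (bar y), oone B) \<in> R B"
proof -
  have o: "x \<in> Omega B" "y \<in> Omega B" using R_Omega[OF xy] by auto
  have "(omul B (omul B x E) (bar y), omul B (omul B y (oone B)) (oomm B y)) \<in> R B"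
    by (intro R_mul xy E_R bar_R o)
  also have "omul B (omul B y (oone B)) (oomm B y) = oom B y" using o by (simp add: omul_one_r mul_oomm)
  finally have "(omul B (omul B x E) (bar y), oom B y) \<in> R B" .
  thus ?thesis using stepA[OF grp o(2)] prov_transD by blast
qed

lemma NN_Om: "n \<in> NN \<Longrightarrow> n \<in> Omega B" by (simp add: NN_def)

lemma NN_mul: "n \<in> NN \<Longrightarrow> m \<in> NN \<Longrightarrow> omul B (omul B n E) m \<in> NN"
proof -
  assume n: "n \<in> NN" and m: "m \<in> NN"
  have "(omul B (omul B n E) m, omul B (omul B (oone B) (oone B)) (oone B)) \<in> R B"
    using n m by (intro R_mul E_R) (auto simp: NN_def)
  thus ?thesis using n m E_Om by (auto simp: NN_def omul_one_l oone_Omega intro!: omul_Omega)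
qed

lemma NN_bar: "n \<in> NN \<Longrightarrow> bar n \<in> NN"
proof -
  assume n: "n \<in> NN"
  have "(bar n, oomm B n) \<in> R B" using bar_R n by (simp add: NN_def)
  moreover have "(oomm B n, oomm B (oone B)) \<in> R B" using n by (intro R_oomm ne) (simp add: NN_def)
  ultimately have "(bar n, oone B) \<in> R B" using prov_transD oomm_one by metis
  thus ?thesis using bar_Om n by (simp add: NN_def)
qed

lemma NN_one: "oone B \<in> NN" using Rr oone_Omega by (simp add: NN_def)

lemma NN_conj: assumes a: "a \<in> Omega B" and n: "n \<in> NN"
  shows "omul B (omul B (omul B (omul B a E) n) E) (bar a) \<in> NN"
proof -
  have "(omul B (omul B (omul B (omul B a E) n) E) (bar a),
         omul B (omul B (omul B (omul B a (oone B)) (oone B)) (oone B)) (oomm B a)) \<in> R B"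
    using n a by (intro R_mul E_R Rr bar_R) (auto simp: NN_def)
  also have "omul B (omul B (omul B (omul B a (oone B)) (oone B)) (oone B)) (oomm B a) = oom B a"
    using a by (simp add: omul_one_r mul_oomm)
  finally have "(omul B (omul B (omul B (omul B a E) n) E) (bar a), oone B) \<in> R B"
    using stepA[OF grp a] prov_transD by blast
  thus ?thesis using a n E_Om bar_Om by (auto simp: NN_def intro!: omul_Omega)
qed

end



context mainctx begin

lemma pt_basic:
  assumes t: "(T, f) \<in> tests B"
  shows "monoid T" "E T f \<in> carrier T" "E T f \<otimes>\<^bsub>T\<^esub> E T f = E T f"
    "\<And>y. y \<in> carrier T \<Longrightarrow> E T f \<otimes>\<^bsub>T\<^esub> (E T f \<otimes>\<^bsub>T\<^esub> y) = E T f \<otimes>\<^bsub>T\<^esub> y"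
proof -
  show T: "monoid T" using t by (auto simp: tests_def)
  show e: "E T f \<in> carrier T" using Omega_carrier[OF E_Om t] .
  show ee: "E T f \<otimes>\<^bsub>T\<^esub> E T f = E T f" using E_idem_pt[OF t] .
  show "\<And>y. y \<in> carrier T \<Longrightarrow> E T f \<otimes>\<^bsub>T\<^esub> (E T f \<otimes>\<^bsub>T\<^esub> y) = E T f \<otimes>\<^bsub>T\<^esub> y"
    using ee e T by (simp add: monoid.m_assoc[symmetric])
qed

lemma hat_mul_pt:
  assumes t: "(T, f) \<in> tests B" and x: "x \<in> Omega B" and y: "y \<in> Omega B"
  shows "hat x T f \<otimes>\<^bsub>T\<^esub> hat y T f = hat (omul B (omul B x E) y) T f"
proof -
  note P = pt_basic[OF t]
  have xc: "x T f \<in> carrier T" "y T f \<in> carrier T" using Omega_carrier[OF x t] Omega_carrier[OF y t] by auto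
  show ?thesis using P xc t by (simp add: hat_pt monoid.m_assoc monoid.m_closed)
qed

lemma hat_one_pt: assumes t: "(T, f) \<in> tests B" shows "hat (oone B) T f = E T f"
  using pt_basic[OF t] t by (simp add: hat_pt monoid.r_one)

lemma hat_E_l: assumes t: "(T, f) \<in> tests B" and x: "x \<in> Omega B"
  shows "E T f \<otimes>\<^bsub>T\<^esub> hat x T f = hat x T f"
proof -
  note P = pt_basic[OF t]
  have xc: "x T f \<in> carrier T" using Omega_carrier[OF x t] .
  show ?thesis using P xc t by (simp add: hat_pt monoid.m_assoc monoid.m_closed)
qed

end

locale fctx = mainctx +
  fixes F :: "(nat monoid \<times> (nat \<Rightarrow> nat)) set"
  assumes finF: "finite F" and subF: "F \<subseteq> tests B"
begin

definition Phi :: "pw \<Rightarrow> (nat monoid \<times> (nat \<Rightarrow> nat)) \<Rightarrow> nat" where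
  "Phi x = restrict (\<lambda>g. hat x (fst g) (snd g)) F"

definition GG :: "((nat monoid \<times> (nat \<Rightarrow> nat)) \<Rightarrow> nat) monoid" where
  "GG = \<lparr>carrier = Phi ` Omega B, mult = (\<lambda>a b. restrict (\<lambda>g. a g \<otimes>\<^bsub>fst g\<^esub> b g) F), one = Phi (oone B)\<rparr>"

lemma tF: "g \<in> F \<Longrightarrow> (fst g, snd g) \<in> tests B" using subF by auto

lemma Phi_mul: assumes x: "x \<in> Omega B" and y: "y \<in> Omega B"
  shows "Phi x \<otimes>\<^bsub>GG\<^esub> Phi y = Phi (omul B (omul B x E) y)"
  unfolding GG_def Phi_def by (simp, rule restrict_ext) (simp add: hat_mul_pt[OF tF x y])

lemma Phi_one_l: assumes x: "x \<in> Omega B" shows "\<one>\<^bsub>GG\<^esub> \<otimes>\<^bsub>GG\<^esub> Phi x = Phi x"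
  unfolding GG_def Phi_def by (simp, rule restrict_ext) (simp add: hat_one_pt[OF tF] hat_E_l[OF tF x])

lemma Phi_inv: assumes x: "x \<in> Omega B" shows "Phi (bar x) \<otimes>\<^bsub>GG\<^esub> Phi x = \<one>\<^bsub>GG\<^esub>"
  unfolding GG_def Phi_def
  by (simp, rule restrict_ext) (simp add: hat_one_pt[OF tF] hat_bar[OF x] pt_facts(1)[OF tF x])

lemma GG_carrier: "carrier GG = Phi ` Omega B" by (simp add: GG_def)

lemma GG_group: "group GG"
proof (rule groupI)
  fix a b assume "a \<in> carrier GG" "b \<in> carrier GG"
  then obtain x y where "x \<in> Omega B" "y \<in> Omega B" "a = Phi x" "b = Phi y" unfolding GG_carrier by auto
  thus "a \<otimes>\<^bsub>GG\<^esub> b \<in> carrier GG" using Phi_mul E_Om unfolding GG_carrier by (auto intro!: omul_Omega)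
next
  show "\<one>\<^bsub>GG\<^esub> \<in> carrier GG" using oone_Omega by (simp add: GG_def)
next
  fix a b c assume "a \<in> carrier GG" "b \<in> carrier GG" "c \<in> carrier GG"
  then obtain x y z where o: "x \<in> Omega B" "y \<in> Omega B" "z \<in> Omega B" and d: "a = Phi x" "b = Phi y" "c = Phi z"
    unfolding GG_carrier by auto
  have "a \<otimes>\<^bsub>GG\<^esub> b \<otimes>\<^bsub>GG\<^esub> c = Phi (omul B (omul B (omul B (omul B x E) y) E) z)"
    using o d Phi_mul E_Om by (simp add: omul_Omega)
  also have "\<dots> = Phi (omul B (omul B x E) (omul B (omul B y E) z))"
    using o E_Om by (simp add: omul_assoc omul_Omega)
  also have "\<dots> = a \<otimes>\<^bsub>GG\<^esub> (b \<otimes>\<^bsub>GG\<^esub> c)" using o d Phi_mul E_Om by (simp add: omul_Omega)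
  finally show "a \<otimes>\<^bsub>GG\<^esub> b \<otimes>\<^bsub>GG\<^esub> c = a \<otimes>\<^bsub>GG\<^esub> (b \<otimes>\<^bsub>GG\<^esub> c)" .
next
  fix a assume "a \<in> carrier GG"
  thus "\<one>\<^bsub>GG\<^esub> \<otimes>\<^bsub>GG\<^esub> a = a" using Phi_one_l unfolding GG_carrier by auto
next
  fix a assume "a \<in> carrier GG"
  then obtain x where x: "x \<in> Omega B" "a = Phi x" unfolding GG_carrier by auto
  thus "\<exists>b\<in>carrier GG. b \<otimes>\<^bsub>GG\<^esub> a = \<one>\<^bsub>GG\<^esub>"
    using Phi_inv[OF x(1)] bar_Om[OF x(1)] unfolding GG_carrier by auto
qed

lemma GG_finite: "finite (carrier GG)"
proof (rule finite_subset)
  show "carrier GG \<subseteq> PiE F (\<lambda>g. carrier (fst g))"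
    unfolding GG_carrier Phi_def using Omega_carrier[OF hat_Om tF] by auto
  show "finite (PiE F (\<lambda>g. carrier (fst g)))" using finF tF by (intro finite_PiE) (auto simp: tests_def)
qed

lemma Phi_carrier: "x \<in> Omega B \<Longrightarrow> Phi x \<in> carrier GG" unfolding GG_carrier by auto

lemma inv_Phi: assumes x: "x \<in> Omega B" shows "inv\<^bsub>GG\<^esub> (Phi x) = Phi (bar x)"
  using group.inv_equality[OF GG_group Phi_inv[OF x] Phi_carrier[OF x] Phi_carrier[OF bar_Om[OF x]]] .

definition SS where "SS = Phi ` NN"

lemma SS_sub: "subgroup SS GG"
proof (rule group.subgroupI[OF GG_group])
  show "SS \<subseteq> carrier GG" unfolding SS_def GG_carrier using NN_Om by auto
  show "SS \<noteq> {}" unfolding SS_def using NN_one by auto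
next
  fix a assume "a \<in> SS"
  then obtain n where n: "n \<in> NN" "a = Phi n" unfolding SS_def by auto
  thus "inv\<^bsub>GG\<^esub> a \<in> SS" using inv_Phi[OF NN_Om[OF n(1)]] NN_bar unfolding SS_def by auto
next
  fix a b assume "a \<in> SS" "b \<in> SS"
  then obtain n m where "n \<in> NN" "m \<in> NN" "a = Phi n" "b = Phi m" unfolding SS_def by auto
  thus "a \<otimes>\<^bsub>GG\<^esub> b \<in> SS" using Phi_mul NN_Om NN_mul unfolding SS_def by auto
qed

lemma SS_normal: "normal SS GG"
proof -
  have "\<forall>x\<in>carrier GG. \<forall>h\<in>SS. x \<otimes>\<^bsub>GG\<^esub> h \<otimes>\<^bsub>GG\<^esub> inv\<^bsub>GG\<^esub> x \<in> SS"
  proof (intro ballI)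
    fix x h assume "x \<in> carrier GG" "h \<in> SS"
    then obtain a n where a: "a \<in> Omega B" "x = Phi a" and n: "n \<in> NN" "h = Phi n"
      unfolding GG_carrier SS_def by auto
    have "x \<otimes>\<^bsub>GG\<^esub> h \<otimes>\<^bsub>GG\<^esub> inv\<^bsub>GG\<^esub> x = Phi (omul B (omul B (omul B (omul B a E) n) E) (bar a))"
      using a n inv_Phi Phi_mul NN_Om E_Om bar_Om by (simp add: omul_Omega)
    thus "x \<otimes>\<^bsub>GG\<^esub> h \<otimes>\<^bsub>GG\<^esub> inv\<^bsub>GG\<^esub> x \<in> SS" using NN_conj[OF a(1) n(1)] unfolding SS_def by auto
  qed
  thus ?thesis using group.normal_inv_iff[OF GG_group] SS_sub by blast
qed

lemma cos_eq: assumes xy: "(x, y) \<in> R B" shows "SS #>\<^bsub>GG\<^esub> Phi x = SS #>\<^bsub>GG\<^esub> Phi y"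
proof -
  have o: "x \<in> Omega B" "y \<in> Omega B" using R_Omega[OF xy] by auto
  have "Phi x \<otimes>\<^bsub>GG\<^esub> inv\<^bsub>GG\<^esub> Phi y = Phi (omul B (omul B x E) (bar y))"
    using o inv_Phi Phi_mul bar_Om by simp
  moreover have "omul B (omul B x E) (bar y) \<in> NN"
    using inv_rel[OF xy] o E_Om bar_Om by (auto simp: NN_def intro!: omul_Omega)
  ultimately have "Phi x \<otimes>\<^bsub>GG\<^esub> inv\<^bsub>GG\<^esub> Phi y \<in> SS" unfolding SS_def by auto
  hence "Phi x \<in> SS #>\<^bsub>GG\<^esub> Phi y"
    using subgroup.rcos_module[OF SS_sub GG_group Phi_carrier[OF o(2)] Phi_carrier[OF o(1)]] by simp
  thus ?thesis using group.repr_independence[OF GG_group _ Phi_carrier[OF o(2)] SS_sub] by simp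
qed

definition k0 where "k0 x = SS #>\<^bsub>GG\<^esub> Phi x"

abbreviation "QG \<equiv> GG Mod SS"

lemma QG_group: "group QG" using normal.factorgroup_is_group[OF SS_normal] .

lemma QG_finite: "finite (carrier QG)"
  unfolding carrier_FactGroup using GG_finite by simp

lemma k0_carrier: "x \<in> Omega B \<Longrightarrow> k0 x \<in> carrier QG"
  unfolding k0_def carrier_FactGroup using Phi_carrier by auto

lemma QG_carrier: "carrier QG = k0 ` Omega B"
  unfolding carrier_FactGroup k0_def GG_carrier by auto

lemma k0_mul: assumes x: "x \<in> Omega B" and y: "y \<in> Omega B"
  shows "k0 (omul B x y) = k0 x \<otimes>\<^bsub>QG\<^esub> k0 y"
proof -
  have "k0 x \<otimes>\<^bsub>QG\<^esub> k0 y = SS #>\<^bsub>GG\<^esub> (Phi x \<otimes>\<^bsub>GG\<^esub> Phi y)"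
    unfolding k0_def FactGroup_def
    using normal.rcos_sum[OF SS_normal Phi_carrier[OF x] Phi_carrier[OF y]] by simp
  also have "\<dots> = SS #>\<^bsub>GG\<^esub> Phi (omul B (omul B x E) y)" using Phi_mul[OF x y] by simp
  also have "\<dots> = k0 (omul B x y)" unfolding k0_def
  proof (rule cos_eq)
    have "(omul B (omul B x E) y, omul B (omul B x (oone B)) y) \<in> R B"
      by (intro R_mul Rr E_R x y)
    thus "(omul B (omul B x E) y, omul B x y) \<in> R B" using x by (simp add: omul_one_r)
  qed
  finally show ?thesis by simp
qed

lemma k0_one: "k0 (oone B) = \<one>\<^bsub>QG\<^esub>"
proof -
  have "Phi (oone B) = \<one>\<^bsub>GG\<^esub>" by (simp add: GG_def)
  hence "k0 (oone B) = SS #>\<^bsub>GG\<^esub> \<one>\<^bsub>GG\<^esub>" by (simp add: k0_def)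
  also have "\<dots> = SS" using group.coset_mult_one[OF GG_group] subgroup.subset[OF SS_sub] by blast
  finally show ?thesis by (simp add: FactGroup_def)
qed

lemma Phi_agree: assumes "agree F x x'" "x \<in> Omega B" "x' \<in> Omega B" shows "Phi x = Phi x'"
  unfolding Phi_def
proof (rule restrict_ext)
  fix g assume g: "g \<in> F"
  have "x (fst g) (snd g) = x' (fst g) (snd g)" using assms(1) g unfolding agree_def by auto
  thus "hat x (fst g) (snd g) = hat x' (fst g) (snd g)" using hat_pt[OF tF[OF g]] by simp
qed

lemma main_F:
  assumes u: "u \<in> Omega B" and v: "v \<in> Omega B" and valid: "\<forall>T\<in>models Sig. psat T (B, u, v)"
  shows "\<exists>n\<in>NN. Phi u = Phi (omul B (omul B n E) v)"
proof -
  obtain T :: "nat monoid" and \<iota> where T: "monoid T" "finite (carrier T)" "carrier T = \<iota> ` carrier QG"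
    "inj_on \<iota> (carrier QG)" "\<forall>x\<in>carrier QG. \<forall>y\<in>carrier QG. \<iota> (x \<otimes>\<^bsub>QG\<^esub> y) = \<iota> x \<otimes>\<^bsub>T\<^esub> \<iota> y"
    "\<iota> \<one>\<^bsub>QG\<^esub> = \<one>\<^bsub>T\<^esub>"
    using transport[OF group.is_monoid[OF QG_group] QG_finite] by blast
  define \<kappa> where "\<kappa> x = \<iota> (k0 x)" for x
  have chf: "cont_hom_fin B T \<kappa>" unfolding cont_hom_fin_def
  proof (intro conjI ballI)
    show "\<kappa> \<in> Omega B \<rightarrow> carrier T" using k0_carrier T(3) by (auto simp: \<kappa>_def)
  next
    fix x y assume "x \<in> Omega B" "y \<in> Omega B"
    thus "\<kappa> (omul B x y) = \<kappa> x \<otimes>\<^bsub>T\<^esub> \<kappa> y" using k0_mul k0_carrier T(5) by (simp add: \<kappa>_def)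
  next
    show "\<kappa> (oone B) = \<one>\<^bsub>T\<^esub>" using k0_one T(6) by (simp add: \<kappa>_def)
  next
    fix x assume x: "x \<in> Omega B"
    show "\<exists>F'. finite F' \<and> F' \<subseteq> tests B \<and> (\<forall>u'\<in>Omega B. agree F' x u' \<longrightarrow> \<kappa> u' = \<kappa> x)"
      using finF subF Phi_agree x by (intro exI[of _ F]) (auto simp: \<kappa>_def k0_def)
  qed
  have resp: "\<kappa> x = \<kappa> y" if "(x, y) \<in> R B" for x y using cos_eq[OF that] by (simp add: \<kappa>_def k0_def)
  have Tmod: "T \<in> models Sig" unfolding models_def
  proof (intro CollectI conjI ballI)
    show "monoid T" "finite (carrier T)" using T by auto
  next
    fix s assume s: "s \<in> Sig"
    obtain C p q where sd: "s = (C, p, q)" by (cases s) auto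
    have pq: "p \<in> Omega C" "q \<in> Omega C" using wf s sd by auto
    show "psat T s" unfolding sd psat_def
    proof (simp, intro allI impI)
      fix \<psi> assume \<psi>: "cont_hom_fin C T \<psi>"
      have ex: "\<exists>a. a \<in> Omega B \<and> \<kappa> a = \<psi> (gen C c)" if c: "c \<in> C" for c
      proof -
        have "\<psi> (gen C c) \<in> carrier T" using chf_carrier[OF \<psi> gen_Omega[OF c]] .
        thus ?thesis using T(3) QG_carrier by (auto simp: \<kappa>_def)
      qed
      define w where "w c = (if c \<in> C then (SOME a. a \<in> Omega B \<and> \<kappa> a = \<psi> (gen C c)) else oone B)" for c
      have w: "\<forall>c\<in>C. w c \<in> Omega B \<and> \<kappa> (w c) = \<psi> (gen C c)"
        using someI_ex[OF ex] by (simp add: w_def)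
      have wO: "\<forall>c\<in>C. w c \<in> Omega B" using w by blast
      have ch: "cont_hom C B (subst B w)" by (rule subst_cont_hom[OF wO])
      have eq: "\<psi> z = (\<kappa> \<circ> subst B w) z" if "z \<in> Omega C" for z
      proof (rule uniqueness[OF \<psi> comp_chf[OF ch chf] _ that])
        show "\<forall>c\<in>C. \<psi> (gen C c) = (\<kappa> \<circ> subst B w) (gen C c)" using w subst_gen[OF wO] by simp
      qed
      have "(subst B w p, subst B w q) \<in> R B"
        using Sigma0_inst[OF _ ch] s sd prov_Sigma0 by blast
      thus "\<psi> p = \<psi> q" using eq pq resp by simp
    qed
  qed
  have "\<kappa> u = \<kappa> v" using valid Tmod chf unfolding psat_def by auto
  hence k: "k0 u = k0 v" using T(4) k0_carrier u v by (auto simp: \<kappa>_def inj_on_def)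
  have "Phi u \<in> SS #>\<^bsub>GG\<^esub> Phi u" using group.rcos_self[OF GG_group Phi_carrier[OF u] SS_sub] .
  hence "Phi u \<in> SS #>\<^bsub>GG\<^esub> Phi v" using k by (simp add: k0_def)
  then obtain h where h: "h \<in> SS" "Phi u = h \<otimes>\<^bsub>GG\<^esub> Phi v" unfolding r_coset_def by auto
  then obtain n where n: "n \<in> NN" "h = Phi n" unfolding SS_def by auto
  have "Phi u = Phi (omul B (omul B n E) v)" using h n Phi_mul NN_Om v by simp
  thus ?thesis using n by blast
qed

end



context mainctx begin

lemma main_result:
  assumes u: "u \<in> Omega B" and v: "v \<in> Omega B" and valid: "\<forall>T\<in>models Sig. psat T (B, u, v)"
  shows "(u, v) \<in> R B"
proof -
  have hh: "(hat u, hat v) \<in> R B"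
  proof (rule prov_closeI)
    show "hat u \<in> Omega B" "hat v \<in> Omega B" using hat_Om u v by auto
    fix F assume F: "finite F" "F \<subseteq> tests B"
    interpret fctx Sig B F using F by unfold_locales auto
    obtain n where n: "n \<in> NN" "Phi u = Phi (omul B (omul B n E) v)" using main_F[OF u v valid] by blast
    have "(omul B (omul B n E) v, omul B (omul B (oone B) (oone B)) v) \<in> R B"
      using n(1) by (intro R_mul E_R Rr v) (simp add: NN_def)
    hence "(omul B (omul B n E) v, v) \<in> R B" using v by (simp add: omul_one_l oone_Omega)
    hence r: "(hat (omul B (omul B n E) v), hat v) \<in> R B" by (rule hat_cong)
    have "agree F (hat u) (hat (omul B (omul B n E) v))" unfolding agree_def
    proof (clarify)
      fix T f assume g: "(T, f) \<in> F"
      show "hat u T f = hat (omul B (omul B n E) v) T f"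
        using fun_cong[OF n(2), of "(T, f)"] g by (simp add: Phi_def)
    qed
    thus "\<exists>a' b'. (a', b') \<in> R B \<and> agree F (hat u) a' \<and> agree F (hat v) b'"
      using r agree_refl by blast
  qed
  have "(u, hat u) \<in> R B" using R_sym hat_R u by blast
  moreover have "(hat v, v) \<in> R B" using hat_R v by blast
  ultimately show ?thesis using hh prov_transD by blast
qed

end

theorem corollary8p4:
  fixes Sig :: "(nat set \<times> pw \<times> pw) set"
  assumes "\<forall>(B, u, v)\<in>Sig. finite B \<and> u \<in> Omega B \<and> v \<in> Omega B"
    and "\<forall>T\<in>models Sig. group T"
  shows "h_strong Sig"
  unfolding h_strong_def
proof (intro allI impI, elim conjE)
  fix B u v assume h: "finite B" "u \<in> Omega B" "v \<in> Omega B" "\<forall>T\<in>models Sig. psat T (B, u, v)"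
  interpret mainctx Sig B using assms by unfold_locales auto
  show "(u, v) \<in> provable Sig B" using main_result h by blast
qed


end
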